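(* Let $J\subseteq[n-1]$ with decomposition $J=J_1\sqcup\cdots\sqcup J_m$ into maximal sets of consecutive integers, and put $n_k=|J_k|+1$. Then $X_J\cong\prod_{k=1}^m\mathrm{Pet}_{n_k}$ as varieties.
   Context: $Fl_n=GL_n(\mathbb C)/B$ is the full flag variety of $\mathbb C^n$ and $X_w=\overline{BwB/B}$ the Schubert variety of $w\in\mathfrak S_n$. For any $r\ge2$, $\mathrm{Pet}_r=\{V_\bullet\in Fl_r: N_rV_i\subseteq V_{i+1},\ 1\le i\le r-1\}$ where $N_r$ is the $r\times r$ nilpotent Jordan block ($N_re_1=0$, $N_re_i=e_{i-1}$); $\mathrm{Pet}_1$ is a point. For $J\subseteq[n-1]$, $w_J$ is the longest element of the subgroup of $\mathfrak S_n$ generated by $\{s_i:i\in J\}$ and $X_J=X_{w_J}\cap\mathrm{Pet}_n$. *)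

theory Defs
  imports Complex_Main
begin

text \<open>Square complex matrices of size n are functions nat => nat => complex vanishing
outside the index range {..<n} x {..<n} (0-indexed; row/column i here is i+1 in the paper).\<close>

definition mats :: "nat \<Rightarrow> (nat \<Rightarrow> nat \<Rightarrow> complex) set" where
  "mats n = {g. \<forall>i j. (n \<le> i \<or> n \<le> j) \<longrightarrow> g i j = 0}"

definition mmult :: "nat \<Rightarrow> (nat \<Rightarrow> nat \<Rightarrow> complex) \<Rightarrow> (nat \<Rightarrow> nat \<Rightarrow> complex) \<Rightarrow> (nat \<Rightarrow> nat \<Rightarrow> complex)" where
  "mmult n A B = (\<lambda>i j. if i < n \<and> j < n then (\<Sum>l<n. A i l * B l j) else 0)"

definition idm :: "nat \<Rightarrow> nat \<Rightarrow> nat \<Rightarrow> complex" where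
  "idm n = (\<lambda>i j. if i < n \<and> j < n \<and> i = j then 1 else 0)"

definition GL :: "nat \<Rightarrow> (nat \<Rightarrow> nat \<Rightarrow> complex) set" where
  "GL n = {g \<in> mats n. \<exists>h \<in> mats n. mmult n g h = idm n}"

definition Bor :: "nat \<Rightarrow> (nat \<Rightarrow> nat \<Rightarrow> complex) set" where
  "Bor n = {b \<in> GL n. \<forall>i j. j < i \<longrightarrow> b i j = 0}"

definition flag_of :: "nat \<Rightarrow> (nat \<Rightarrow> nat \<Rightarrow> complex) \<Rightarrow> (nat \<Rightarrow> nat \<Rightarrow> complex) set" where
  "flag_of n g = {mmult n g b | b. b \<in> Bor n}"

definition Fl :: "nat \<Rightarrow> (nat \<Rightarrow> nat \<Rightarrow> complex) set set" where
  "Fl n = flag_of n ` GL n"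

definition fspace :: "nat \<Rightarrow> (nat \<Rightarrow> nat \<Rightarrow> complex) set \<Rightarrow> nat \<Rightarrow> (nat \<Rightarrow> complex) set" where
  "fspace n F i = {v. \<exists>g \<in> F. \<exists>c. v = (\<lambda>a. if a < n then (\<Sum>j<i. c j * g a j) else 0)}"

definition nilp :: "nat \<Rightarrow> (nat \<Rightarrow> complex) \<Rightarrow> (nat \<Rightarrow> complex)" where
  "nilp n v = (\<lambda>a. if a + 1 < n then v (a + 1) else 0)"

definition Pet :: "nat \<Rightarrow> (nat \<Rightarrow> nat \<Rightarrow> complex) set set" where
  "Pet n = {F \<in> Fl n. \<forall>i. 1 \<le> i \<and> i \<le> n - 1 \<longrightarrow> nilp n ` fspace n F i \<subseteq> fspace n F (i + 1)}"

text \<open>Simple transposition s_i (paper indexing i in [n-1]) acting on {0..<n}.\<close>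
definition sref :: "nat \<Rightarrow> nat \<Rightarrow> nat" where
  "sref i = (\<lambda>x. if x = i - 1 then i else if x = i then i - 1 else x)"

text \<open>The subgroup of S_n generated by s_i, i in J (finite group: generated monoid = subgroup).\<close>
inductive_set WJ :: "nat set \<Rightarrow> (nat \<Rightarrow> nat) set" for J where
  WJ_id: "id \<in> WJ J"
| WJ_step: "w \<in> WJ J \<Longrightarrow> i \<in> J \<Longrightarrow> w \<circ> sref i \<in> WJ J"

text \<open>Coxeter length = number of inversions.\<close>
definition perm_length :: "nat \<Rightarrow> (nat \<Rightarrow> nat) \<Rightarrow> nat" where
  "perm_length n w = card {(i, j). i < j \<and> j < n \<and> w j < w i}"

definition longest :: "nat \<Rightarrow> nat set \<Rightarrow> (nat \<Rightarrow> nat)" where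
  "longest n J = (THE w. w \<in> WJ J \<and> (\<forall>v \<in> WJ J. perm_length n v \<le> perm_length n w))"

definition pmat :: "nat \<Rightarrow> (nat \<Rightarrow> nat) \<Rightarrow> nat \<Rightarrow> nat \<Rightarrow> complex" where
  "pmat n w = (\<lambda>a b. if a < n \<and> b < n \<and> a = w b then 1 else 0)"

definition BwB :: "nat \<Rightarrow> (nat \<Rightarrow> nat) \<Rightarrow> (nat \<Rightarrow> nat \<Rightarrow> complex) set" where
  "BwB n w = {mmult n (mmult n b1 (pmat n w)) b2 | b1 b2. b1 \<in> Bor n \<and> b2 \<in> Bor n}"

text \<open>Schubert variety X_w = closure of BwB/B in Fl_n (quotient topology; its preimage in
GL_n is the closure of BwB in GL_n, GL_n -> Fl_n being open).\<close>
definition Schubert :: "nat \<Rightarrow> (nat \<Rightarrow> nat) \<Rightarrow> (nat \<Rightarrow> nat \<Rightarrow> complex) set set" where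
  "Schubert n w = {flag_of n g | g. g \<in> GL n \<and>
     (\<forall>e>0. \<exists>h \<in> BwB n w. \<forall>i<n. \<forall>j<n. cmod (g i j - h i j) < e)}"

definition XJ :: "nat \<Rightarrow> nat set \<Rightarrow> (nat \<Rightarrow> nat \<Rightarrow> complex) set set" where
  "XJ n J = Schubert n (longest n J) \<inter> Pet n"

text \<open>A point of Fl_{ns!0} x ... x Fl_{ns!(m-1)} is a list of flags; a lift is a family of
matrices G k in GL (ns!k) (G k = 0 for k >= m).\<close>

definition mflag :: "nat list \<Rightarrow> (nat \<Rightarrow> nat \<Rightarrow> nat \<Rightarrow> complex) \<Rightarrow> (nat \<Rightarrow> nat \<Rightarrow> complex) set list" where
  "mflag ns G = map (\<lambda>k. flag_of (ns ! k) (G k)) [0..<length ns]"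

definition lifts :: "nat list \<Rightarrow> (nat \<Rightarrow> nat \<Rightarrow> complex) set list set \<Rightarrow> (nat \<Rightarrow> nat \<Rightarrow> nat \<Rightarrow> complex) set" where
  "lifts ns X = {G. (\<forall>k < length ns. G k \<in> GL (ns ! k)) \<and> (\<forall>k. length ns \<le> k \<longrightarrow> G k = (\<lambda>i j. 0))
                    \<and> mflag ns G \<in> X}"

inductive_set polyfun :: "((nat \<Rightarrow> nat \<Rightarrow> nat \<Rightarrow> complex) \<Rightarrow> complex) set" where
  pf_const: "(\<lambda>G. c) \<in> polyfun"
| pf_coord: "(\<lambda>G. G k i j) \<in> polyfun"
| pf_add: "p \<in> polyfun \<Longrightarrow> q \<in> polyfun \<Longrightarrow> (\<lambda>G. p G + q G) \<in> polyfun"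
| pf_mult: "p \<in> polyfun \<Longrightarrow> q \<in> polyfun \<Longrightarrow> (\<lambda>G. p G * q G) \<in> polyfun"

text \<open>f : X -> Y is a morphism of (reduced) varieties: Zariski-locally on the preimage of X
in the product of GL's it lifts to a regular map into the product of GL's of the target
(denominators being absorbed into the scalar block factors, which do not change flags).\<close>
definition morphism :: "nat list \<Rightarrow> (nat \<Rightarrow> nat \<Rightarrow> complex) set list set \<Rightarrow> nat list
    \<Rightarrow> ((nat \<Rightarrow> nat \<Rightarrow> complex) set list \<Rightarrow> (nat \<Rightarrow> nat \<Rightarrow> complex) set list) \<Rightarrow> bool" where
  "morphism ns X ms f \<longleftrightarrow>
     (\<forall>G0 \<in> lifts ns X. \<exists>P q. q \<in> polyfun \<and> (\<forall>k i j. P k i j \<in> polyfun) \<and> q G0 \<noteq> 0 \<and>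
        (\<forall>G \<in> lifts ns X. q G \<noteq> 0 \<longrightarrow>
           (let H = (\<lambda>k i j. if k < length ms \<and> i < ms ! k \<and> j < ms ! k then P k i j G else 0)
            in (\<forall>k < length ms. H k \<in> GL (ms ! k)) \<and> mflag ms H = f (mflag ns G))))"

definition var_iso :: "nat list \<Rightarrow> (nat \<Rightarrow> nat \<Rightarrow> complex) set list set \<Rightarrow> nat list
    \<Rightarrow> (nat \<Rightarrow> nat \<Rightarrow> complex) set list set \<Rightarrow> bool" where
  "var_iso ns X ms Y \<longleftrightarrow> (\<exists>f. bij_betw f X Y \<and> morphism ns X ms f \<and> morphism ms Y ns (inv_into X f))"

definition prod_Pet :: "nat list \<Rightarrow> (nat \<Rightarrow> nat \<Rightarrow> complex) set list set" where
  "prod_Pet ns = {Fs. length Fs = length ns \<and> (\<forall>k < length ns. Fs ! k \<in> Pet (ns ! k))}"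

end

theory Submission
  imports Defs "Jordan_Normal_Form.Determinant"
begin


lemma mats_zero: "g \<in> mats n \<Longrightarrow> n \<le> i \<or> n \<le> j \<Longrightarrow> g i j = 0"
  by (auto simp: mats_def)

lemma mmult_mats[simp]: "mmult m A B \<in> mats m"
  by (auto simp: mmult_def mats_def)

lemma idm_mats[simp]: "idm m \<in> mats m"
  by (auto simp: idm_def mats_def)

lemma mmult_assoc: "mmult m (mmult m A B) C = mmult m A (mmult m B C)"
proof -
  have "(\<Sum>l<m. (\<Sum>l'<m. A i l' * B l' l) * C l j) = (\<Sum>l'<m. A i l' * (\<Sum>l<m. B l' l * C l j))" for i j
  proof -
    have "(\<Sum>l<m. (\<Sum>l'<m. A i l' * B l' l) * C l j) = (\<Sum>l<m. \<Sum>l'<m. A i l' * (B l' l * C l j))"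
      by (simp add: sum_distrib_right mult.assoc)
    also have "\<dots> = (\<Sum>l'<m. \<Sum>l<m. A i l' * (B l' l * C l j))" by (rule sum.swap)
    also have "\<dots> = (\<Sum>l'<m. A i l' * (\<Sum>l<m. B l' l * C l j))" by (simp add: sum_distrib_left)
    finally show ?thesis .
  qed
  then show ?thesis by (auto simp: mmult_def fun_eq_iff)
qed

lemma mmult_idm_left: "A \<in> mats m \<Longrightarrow> mmult m (idm m) A = A"
  by (auto simp: mmult_def idm_def fun_eq_iff mats_def if_distrib[of "\<lambda>x. x * _"] sum.delta cong: if_cong)

lemma mmult_idm_right: "A \<in> mats m \<Longrightarrow> mmult m A (idm m) = A"
  by (auto simp: mmult_def idm_def fun_eq_iff mats_def if_distrib[of "\<lambda>x. _ * x"] sum.delta' cong: if_cong)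

definition tomat :: "nat \<Rightarrow> (nat \<Rightarrow> nat \<Rightarrow> complex) \<Rightarrow> complex mat" where
  "tomat m A = mat m m (\<lambda>(i,j). A i j)"

lemma tomat_carrier: "tomat m A \<in> carrier_mat m m" by (simp add: tomat_def)

lemma tomat_mult: "tomat m (mmult m A B) = tomat m A * tomat m B"
proof (rule eq_matI)
  fix i j assume ij: "i < dim_row (tomat m A * tomat m B)" "j < dim_col (tomat m A * tomat m B)"
  then have i: "i < m" and j: "j < m" by (auto simp: tomat_def)
  have "(tomat m A * tomat m B) $$ (i,j) = row (tomat m A) i \<bullet> col (tomat m B) j"
    using i j by (simp add: tomat_def)
  also have "\<dots> = (\<Sum>l\<in>{0..<m}. A i l * B l j)"
    using i j by (simp add: scalar_prod_def tomat_def)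
  also have "\<dots> = tomat m (mmult m A B) $$ (i,j)"
    using i j by (simp add: tomat_def mmult_def atLeast0LessThan)
  finally show "tomat m (mmult m A B) $$ (i,j) = (tomat m A * tomat m B) $$ (i,j)" by simp
qed (auto simp: tomat_def)

lemma tomat_idm: "tomat m (idm m) = 1\<^sub>m m"
  by (rule eq_matI) (auto simp: tomat_def idm_def)

lemma tomat_inj: "A \<in> mats m \<Longrightarrow> B \<in> mats m \<Longrightarrow> tomat m A = tomat m B \<Longrightarrow> A = B"
proof -
  assume a: "A \<in> mats m" "B \<in> mats m" "tomat m A = tomat m B"
  show "A = B"
  proof (rule ext, rule ext)
    fix i j show "A i j = B i j"
    proof (cases "i < m \<and> j < m")
      case True
      have "tomat m A $$ (i,j) = tomat m B $$ (i,j)" using a by simp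
      then show ?thesis using True by (simp add: tomat_def)
    next
      case False then show ?thesis using a by (auto simp: mats_def)
    qed
  qed
qed

lemma left_right_inv:
  assumes "A \<in> mats m" "B \<in> mats m" "mmult m A B = idm m"
  shows "mmult m B A = idm m"
proof -
  have "tomat m A * tomat m B = 1\<^sub>m m" using assms by (metis tomat_mult tomat_idm)
  then have "tomat m B * tomat m A = 1\<^sub>m m"
    by (rule mat_mult_left_right_inverse[OF tomat_carrier tomat_carrier])
  then have "tomat m (mmult m B A) = tomat m (idm m)" by (simp add: tomat_mult tomat_idm)
  then show ?thesis by (rule tomat_inj[OF mmult_mats idm_mats])
qed




definition PJ :: "nat \<Rightarrow> nat set \<Rightarrow> (nat \<Rightarrow> nat \<Rightarrow> complex) set" where
  "PJ m J = {g \<in> mats m. \<forall>s i j. s \<notin> J \<longrightarrow> j < s \<longrightarrow> s \<le> i \<longrightarrow> g i j = 0}"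

lemma PJ_zero: "g \<in> PJ m J \<Longrightarrow> s \<notin> J \<Longrightarrow> j < s \<Longrightarrow> s \<le> i \<Longrightarrow> g i j = 0"
  by (auto simp: PJ_def)

lemma PJ_mats: "g \<in> PJ m J \<Longrightarrow> g \<in> mats m" by (auto simp: PJ_def)

lemma sum_split_ge:
  fixes f :: "nat \<Rightarrow> complex"
  assumes "\<And>l. l < s \<Longrightarrow> f l = 0"
  shows "(\<Sum>l<m. if s \<le> l then f l else 0) = (\<Sum>l<m. f l)"
  by (rule sum.cong) (auto simp: assms not_le)

lemma PJ_mult: "A \<in> PJ m J \<Longrightarrow> B \<in> PJ m J \<Longrightarrow> mmult m A B \<in> PJ m J"
proof -
  assume A: "A \<in> PJ m J" and B: "B \<in> PJ m J"
  have "(\<Sum>l<m. A i l * B l j) = 0" if "s \<notin> J" "j < s" "s \<le> i" for s i j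
  proof (rule sum.neutral, rule ballI)
    fix l show "A i l * B l j = 0"
    proof (cases "l < s")
      case True then show ?thesis using PJ_zero[OF A that(1) True that(3)] by simp
    next
      case False then show ?thesis using PJ_zero[OF B that(1) that(2)] by simp
    qed
  qed
  then show ?thesis using A by (auto simp: PJ_def mmult_def mats_def)
qed

lemma idm_PJ[simp]: "idm m \<in> PJ m J"
  by (auto simp: PJ_def idm_def mats_def)

lemma inv_block0:
  assumes A: "A \<in> mats m" and B: "B \<in> mats m" and AB: "mmult m A B = idm m"
    and hA: "\<And>i j. j < s \<Longrightarrow> s \<le> i \<Longrightarrow> A i j = 0"
    and ij: "j < s" "s \<le> i"
  shows "B i j = 0"
proof (cases "i < m")
  case False then show ?thesis using B by (auto simp: mats_def)
next
  case im: True
  define A' where "A' = (\<lambda>i j. if i < m \<and> j < m then (if s \<le> i \<and> s \<le> j then A i j else if i = j then 1 else 0) else (0::complex))"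
  define B' where "B' = (\<lambda>i j. if i < m \<and> j < m then (if s \<le> i \<and> s \<le> j then B i j else if i = j then 1 else 0) else (0::complex))"
  have A'm: "A' \<in> mats m" and B'm: "B' \<in> mats m" by (auto simp: mats_def A'_def B'_def)
  have ABe: "(\<Sum>l<m. A i l * B l j) = (if i = j then 1 else 0)" if "i < m" "j < m" for i j
    using fun_cong[OF fun_cong[OF AB, of i], of j] that by (simp add: mmult_def idm_def)
  have "mmult m A' B' = idm m"
  proof (rule ext, rule ext)
    fix i j
    show "mmult m A' B' i j = idm m i j"
    proof (cases "i < m \<and> j < m")
      case False then show ?thesis by (auto simp: mmult_def idm_def)
    next
      case True
      then have i: "i < m" and j: "j < m" by auto
      show ?thesis
      proof (cases "i < s")
        case True
        have "(\<Sum>l<m. A' i l * B' l j) = (\<Sum>l<m. if l = i then B' i j else 0)"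
          by (rule sum.cong) (use True i in \<open>auto simp: A'_def\<close>)
        also have "\<dots> = B' i j" using i by simp
        finally show ?thesis using True i j by (simp add: mmult_def idm_def B'_def)
      next
        case si: False
        show ?thesis
        proof (cases "j < s")
          case True
          have "(\<Sum>l<m. A' i l * B' l j) = (\<Sum>l<m. if l = j then A' i j else 0)"
            by (rule sum.cong) (use True j in \<open>auto simp: B'_def\<close>)
          also have "\<dots> = A' i j" using j by simp
          finally show ?thesis using True si i j by (simp add: mmult_def idm_def A'_def)
        next
          case False
          have "(\<Sum>l<m. A' i l * B' l j) = (\<Sum>l<m. if s \<le> l then A i l * B l j else 0)"
            by (rule sum.cong) (use False si i j in \<open>auto simp: A'_def B'_def\<close>)
          also have "\<dots> = (\<Sum>l<m. A i l * B l j)"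
            by (rule sum_split_ge) (use hA si in auto)
          finally show ?thesis using ABe[OF i j] i j by (simp add: mmult_def idm_def)
        qed
      qed
    qed
  qed
  then have BA': "mmult m B' A' = idm m" by (rule left_right_inv[OF A'm B'm])
  have star: "(\<Sum>l<m. if s \<le> l then B i l * A l j else 0) = (if i = j then 1 else 0)"
    if "s \<le> i" "s \<le> j" "i < m" "j < m" for i j
  proof -
    have "(\<Sum>l<m. if s \<le> l then B i l * A l j else 0) = (\<Sum>l<m. B' i l * A' l j)"
      by (rule sum.cong) (use that in \<open>auto simp: A'_def B'_def\<close>)
    also have "\<dots> = mmult m B' A' i j" using that by (simp add: mmult_def)
    finally show ?thesis using BA' that by (simp add: idm_def)
  qed
  have star2: "(\<Sum>l<m. if s \<le> l then A l' l * B l j else 0) = 0" if "s \<le> l'" "l' < m" for l'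
  proof -
    have "(\<Sum>l<m. if s \<le> l then A l' l * B l j else 0) = (\<Sum>l<m. A l' l * B l j)"
      by (rule sum_split_ge) (use hA that in auto)
    also have "\<dots> = 0" using ABe[of l' j] that ij im \<open>j < s\<close> by simp
    finally show ?thesis .
  qed
  have "(\<Sum>l<m. if s \<le> l then (if i = l then 1 else 0) * B l j else 0) = (\<Sum>l<m. if l = i then B i j else 0)"
    by (rule sum.cong) (use ij in auto)
  then have "B i j = (\<Sum>l<m. if s \<le> l then (if i = l then 1 else 0) * B l j else 0)"
    using im by simp
  also have "\<dots> = (\<Sum>l<m. if s \<le> l then (\<Sum>l'<m. if s \<le> l' then B i l' * A l' l else 0) * B l j else 0)"
    by (rule sum.cong) (use star ij im in auto)
  also have "\<dots> = (\<Sum>l<m. \<Sum>l'<m. if s \<le> l' then B i l' * (if s \<le> l then A l' l * B l j else 0) else 0)"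
    by (rule sum.cong) (auto simp: sum_distrib_right intro!: sum.cong sum.neutral)
  also have "\<dots> = (\<Sum>l'<m. \<Sum>l<m. if s \<le> l' then B i l' * (if s \<le> l then A l' l * B l j else 0) else 0)"
    by (rule sum.swap)
  also have "\<dots> = (\<Sum>l'<m. if s \<le> l' then B i l' * (\<Sum>l<m. if s \<le> l then A l' l * B l j else 0) else 0)"
    by (rule sum.cong) (auto simp: sum_distrib_left)
  also have "\<dots> = 0"
    by (rule sum.neutral) (use star2 in auto)
  finally show ?thesis .
qed

lemma PJ_inv:
  assumes "A \<in> PJ m J" "B \<in> mats m" "mmult m A B = idm m"
  shows "B \<in> PJ m J"
proof -
  have "B i j = 0" if "s \<notin> J" "j < s" "s \<le> i" for s i j
    by (rule inv_block0[OF PJ_mats[OF assms(1)] assms(2,3)]) (use PJ_zero[OF assms(1) that(1)] that in auto)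
  then show ?thesis using assms(2) by (auto simp: PJ_def)
qed




lemma GL_iff: "g \<in> GL m \<longleftrightarrow> g \<in> mats m \<and> (\<exists>h \<in> mats m. mmult m g h = idm m)"
  by (simp add: GL_def)

lemma GL_mats: "g \<in> GL m \<Longrightarrow> g \<in> mats m" by (simp add: GL_def)

lemma GL_inv2: "g \<in> GL m \<Longrightarrow> \<exists>h \<in> GL m. mmult m g h = idm m \<and> mmult m h g = idm m"
proof -
  assume g: "g \<in> GL m"
  then obtain h where h: "h \<in> mats m" "mmult m g h = idm m" by (auto simp: GL_def)
  have hg: "mmult m h g = idm m" by (rule left_right_inv[OF GL_mats[OF g] h])
  then have "h \<in> GL m" using h g by (auto simp: GL_def)
  then show ?thesis using h hg by blast
qed

lemma idm_GL[simp]: "idm m \<in> GL m"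
  by (auto simp: GL_def intro!: bexI[of _ "idm m"] simp: mmult_idm_left)

lemma GL_mult: "g \<in> GL m \<Longrightarrow> h \<in> GL m \<Longrightarrow> mmult m g h \<in> GL m"
proof -
  assume g: "g \<in> GL m" and h: "h \<in> GL m"
  obtain g' where g': "g' \<in> mats m" "mmult m g g' = idm m" using g by (auto simp: GL_def)
  obtain h' where h': "h' \<in> mats m" "mmult m h h' = idm m" using h by (auto simp: GL_def)
  have "mmult m (mmult m g h) (mmult m h' g') = mmult m g (mmult m (mmult m h h') g')"
    by (simp add: mmult_assoc)
  also have "\<dots> = idm m" using h' g' by (simp add: mmult_idm_left)
  finally show ?thesis by (auto simp: GL_def intro!: bexI[of _ "mmult m h' g'"])
qed

lemma upper_PJ: "g \<in> mats m \<Longrightarrow> (\<forall>i j. j < i \<longrightarrow> g i j = 0) \<Longrightarrow> g \<in> PJ m J"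
  by (auto simp: PJ_def)

lemma Bor_eq: "Bor m = PJ m {} \<inter> GL m"
proof -
  have "(\<forall>i j. j < i \<longrightarrow> g i j = 0) \<longleftrightarrow> (\<forall>s i j. j < s \<longrightarrow> s \<le> i \<longrightarrow> g i j = 0)" for g :: "nat \<Rightarrow> nat \<Rightarrow> complex"
    by (metis less_le_trans order_refl)
  then show ?thesis by (auto simp: Bor_def PJ_def GL_def)
qed

lemma Bor_PJ: "b \<in> Bor m \<Longrightarrow> b \<in> PJ m J"
  by (auto simp: Bor_def GL_def intro: upper_PJ)

lemma Bor_GL: "b \<in> Bor m \<Longrightarrow> b \<in> GL m" by (simp add: Bor_def)

lemma Bor_mult: "b \<in> Bor m \<Longrightarrow> c \<in> Bor m \<Longrightarrow> mmult m b c \<in> Bor m"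
  by (simp add: Bor_eq PJ_mult GL_mult)

lemma idm_Bor[simp]: "idm m \<in> Bor m" by (simp add: Bor_eq)

lemma Bor_inv2: "b \<in> Bor m \<Longrightarrow> \<exists>c \<in> Bor m. mmult m b c = idm m \<and> mmult m c b = idm m"
proof -
  assume b: "b \<in> Bor m"
  obtain c where c: "c \<in> GL m" "mmult m b c = idm m" "mmult m c b = idm m" using GL_inv2[OF Bor_GL[OF b]] by blast
  have "c \<in> PJ m {}" using PJ_inv[of b m "{}" c] b c by (auto simp: Bor_eq GL_def)
  then show ?thesis using c by (auto simp: Bor_eq)
qed

lemma flag_self: "g \<in> mats m \<Longrightarrow> g \<in> flag_of m g"
  unfolding flag_of_def by (rule CollectI, rule exI[of _ "idm m"]) (simp add: mmult_idm_right)

lemma flag_mem: "g' \<in> flag_of m g \<longleftrightarrow> (\<exists>b \<in> Bor m. g' = mmult m g b)"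
  by (auto simp: flag_of_def)

lemma flag_mem_eq:
  assumes "g' \<in> flag_of m g"
  shows "flag_of m g' = flag_of m g"
proof -
  obtain b where b: "b \<in> Bor m" "g' = mmult m g b" using assms by (auto simp: flag_mem)
  obtain c where c: "c \<in> Bor m" "mmult m b c = idm m" "mmult m c b = idm m" using Bor_inv2[OF b(1)] by blast
  show ?thesis
  proof
    show "flag_of m g' \<subseteq> flag_of m g"
    proof
      fix x assume "x \<in> flag_of m g'"
      then obtain d where d: "d \<in> Bor m" "x = mmult m g' d" by (auto simp: flag_mem)
      then have "x = mmult m g (mmult m b d)" using b by (simp add: mmult_assoc)
      then show "x \<in> flag_of m g" using Bor_mult[OF b(1) d(1)] by (auto simp: flag_mem)
    qed
  next
    show "flag_of m g \<subseteq> flag_of m g'"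
    proof
      fix x assume "x \<in> flag_of m g"
      then obtain d where d: "d \<in> Bor m" "x = mmult m g d" by (auto simp: flag_mem)
      have "x = mmult m g' (mmult m c d)"
      proof -
        have "mmult m g' (mmult m c d) = mmult m g (mmult m (mmult m b c) d)"
          using b by (simp add: mmult_assoc)
        also have "\<dots> = x" using c d by (simp add: mmult_idm_left Bor_GL GL_mats)
        finally show ?thesis by simp
      qed
      then show "x \<in> flag_of m g'" using Bor_mult[OF c(1) d(1)] by (auto simp: flag_mem)
    qed
  qed
qed

lemma flag_mem_GL: "g \<in> GL m \<Longrightarrow> g' \<in> flag_of m g \<Longrightarrow> g' \<in> GL m"
  by (auto simp: flag_mem intro: GL_mult Bor_GL)

lemma flag_mem_PJ: "g \<in> PJ m J \<Longrightarrow> g' \<in> flag_of m g \<Longrightarrow> g' \<in> PJ m J"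
  by (auto simp: flag_mem intro: PJ_mult Bor_PJ)




definition conn :: "nat set \<Rightarrow> nat \<Rightarrow> nat \<Rightarrow> bool" where
  "conn J x y \<longleftrightarrow> (\<forall>i. min x y < i \<and> i \<le> max x y \<longrightarrow> i \<in> J)"

lemma conn_refl[simp]: "conn J x x" by (auto simp: conn_def)
lemma conn_sym: "conn J x y \<Longrightarrow> conn J y x" by (simp add: conn_def min.commute max.commute)
lemma conn_trans: "conn J x y \<Longrightarrow> conn J y z \<Longrightarrow> conn J x z"
  unfolding conn_def
proof (intro allI impI)
  fix i assume a: "\<forall>i. min x y < i \<and> i \<le> max x y \<longrightarrow> i \<in> J" "\<forall>i. min y z < i \<and> i \<le> max y z \<longrightarrow> i \<in> J"
    "min x z < i \<and> i \<le> max x z"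
  show "i \<in> J"
  proof (cases "min x y < i \<and> i \<le> max x y")
    case True then show ?thesis using a by blast
  next
    case False
    then have "min y z < i \<and> i \<le> max y z" using a(3) by (auto simp: min_def max_def split: if_splits)
    then show ?thesis using a by blast
  qed
qed
lemma conn_between: "x \<le> y \<Longrightarrow> y \<le> z \<Longrightarrow> conn J x z \<Longrightarrow> conn J x y \<and> conn J y z"
  unfolding conn_def by auto
lemma not_conn_sep: "j < i \<Longrightarrow> \<not> conn J j i \<Longrightarrow> \<exists>s. s \<notin> J \<and> j < s \<and> s \<le> i"
  unfolding conn_def by auto
lemma conn_sep: "conn J x y \<Longrightarrow> s \<notin> J \<Longrightarrow> x < s \<Longrightarrow> y < s"
  unfolding conn_def by (cases "y < s") (auto simp: min_def max_def)

lemma conn_suc: "conn J y (Suc y) \<longleftrightarrow> Suc y \<in> J"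
  unfolding conn_def by (auto simp: le_Suc_eq)

lemma sref_inv: "1 \<le> i \<Longrightarrow> sref i (sref i x) = x" by (auto simp: sref_def)

lemma sref_conn: "i \<in> J \<Longrightarrow> 1 \<le> i \<Longrightarrow> conn J (sref i x) x"
proof -
  assume a: "i \<in> J" "1 \<le> i"
  have k: "\<And>ia. i - 1 < ia \<Longrightarrow> ia \<le> i \<Longrightarrow> ia = i" using a(2) by linarith
  have k': "\<And>ia. i - 1 < ia \<Longrightarrow> ia \<le> i \<Longrightarrow> ia \<in> J" using k a by blast
  show ?thesis using a by (auto simp: sref_def conn_def intro: k')
qed

locale Jset =
  fixes n :: nat and J :: "nat set"
  assumes hJ: "J \<subseteq> {1..n - 1}"
begin

lemma J_ge1: "i \<in> J \<Longrightarrow> 1 \<le> i" using hJ by auto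
lemma J_lt: "i \<in> J \<Longrightarrow> i < n"
proof -
  assume "i \<in> J" then have "i \<in> {1..n-1}" using hJ by blast
  then show "i < n" by simp linarith
qed

lemma WJ_props: "w \<in> WJ J \<Longrightarrow> (\<forall>x. conn J (w x) x) \<and> inj w"
proof (induction rule: WJ.induct)
  case WJ_id then show ?case by simp
next
  case (WJ_step w i)
  have i1: "1 \<le> i" using J_ge1 WJ_step by simp
  have "conn J (w (sref i x)) x" for x
    using WJ_step sref_conn[OF WJ_step(2) i1] conn_trans by blast
  moreover have "inj (sref i)" by (rule inj_on_inverseI[of _ "sref i"]) (use sref_inv[OF i1] in blast)
  moreover have "inj (w \<circ> sref i)" using WJ_step calculation(2) by (intro inj_compose) auto
  moreover have "inj (\<lambda>a. w (sref i a))" using calculation(3) by (simp add: comp_def)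
  ultimately show ?case using WJ_step by (simp add: comp_def)
qed

lemma conn_ge_n: "conn J y x \<Longrightarrow> n \<le> x \<Longrightarrow> y = x"
proof (rule ccontr)
  assume a: "conn J y x" "n \<le> x" "y \<noteq> x"
  have "max y x \<in> J" using a(1,3) unfolding conn_def by (auto simp: min_def max_def)
  moreover have "n \<le> max y x" using a by simp
  ultimately show False using J_lt by fastforce
qed

lemma conn_lt_n: "conn J y x \<Longrightarrow> x < n \<Longrightarrow> y < n"
proof (rule ccontr)
  assume a: "conn J y x" "x < n" "\<not> y < n"
  have "max y x \<in> J" using a(1,2,3) unfolding conn_def by (auto simp: min_def max_def)
  moreover have "n \<le> max y x" using a by simp
  ultimately show False using J_lt by fastforce
qed

lemma perm_length_bound: "perm_length n w \<le> n * n"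
proof -
  have "{(i, j). i < j \<and> j < n \<and> w j < w i} \<subseteq> {..<n} \<times> {..<n}" by auto
  then have "card {(i, j). i < j \<and> j < n \<and> w j < w i} \<le> card ({..<n} \<times> {..<n})"
    by (intro card_mono) auto
  then show ?thesis by (simp add: perm_length_def card_cartesian_product)
qed

lemma swap_longer:
  assumes i: "i \<in> J" and lt: "w (i - 1) < w i"
  shows "perm_length n w < perm_length n (w \<circ> sref i)"
proof -
  have i1: "1 \<le> i" and iN: "i < n" using J_ge1 J_lt i by auto
  define I1 where "I1 = {(p, q). p < q \<and> q < n \<and> w q < w p}"
  define I2 where "I2 = {(p, q). p < q \<and> q < n \<and> (w \<circ> sref i) q < (w \<circ> sref i) p}"
  define \<phi> where "\<phi> = (\<lambda>(p,q). (sref i p, sref i q))"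
  have fin: "finite I2" by (rule finite_subset[of _ "{..<n} \<times> {..<n}"]) (auto simp: I2_def)
  have inj: "inj_on \<phi> I1"
  proof (rule inj_onI)
    fix x y assume "\<phi> x = \<phi> y"
    then have "sref i (sref i (fst x)) = sref i (sref i (fst y))" "sref i (sref i (snd x)) = sref i (sref i (snd y))"
      by (auto simp: \<phi>_def split: prod.splits)
    then show "x = y" by (simp add: sref_inv[OF i1] prod_eq_iff)
  qed
  have sub: "\<phi> ` I1 \<subseteq> I2"
  proof
    fix x assume "x \<in> \<phi> ` I1"
    then obtain p q where pq: "(p,q) \<in> I1" "x = (sref i p, sref i q)" by (auto simp: \<phi>_def)
    then have pq': "p < q" "q < n" "w q < w p" by (auto simp: I1_def)
    have "\<not> (p = i - 1 \<and> q = i)" using pq' lt by auto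
    then have "sref i p < sref i q" using pq' i1 by (auto simp: sref_def)
    moreover have "sref i q < n" using pq' iN i1 by (auto simp: sref_def)
    moreover have "(w \<circ> sref i) (sref i q) < (w \<circ> sref i) (sref i p)" using pq' sref_inv[OF i1] by simp
    ultimately show "x \<in> I2" using pq by (auto simp: I2_def)
  qed
  have new: "(i - 1, i) \<in> I2 - \<phi> ` I1"
  proof
    show "(i - 1, i) \<in> I2" using i1 iN lt by (auto simp: I2_def sref_def)
    show "(i - 1, i) \<notin> \<phi> ` I1"
    proof
      assume "(i - 1, i) \<in> \<phi> ` I1"
      then obtain p q where "(p,q) \<in> I1" "sref i p = i - 1" "sref i q = i" by (auto simp: \<phi>_def)
      then have "p = i" "q = i - 1" "p < q" using i1 by (auto simp: I1_def sref_def split: if_splits)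
      then show False by simp
    qed
  qed
  have "card I1 = card (\<phi> ` I1)" using inj by (simp add: card_image)
  also have "\<dots> < card I2"
    by (rule psubset_card_mono[OF fin]) (use sub new in blast)
  finally show ?thesis by (simp add: perm_length_def I1_def I2_def)
qed

definition maxw :: "(nat \<Rightarrow> nat) \<Rightarrow> bool" where
  "maxw w \<longleftrightarrow> w \<in> WJ J \<and> (\<forall>v \<in> WJ J. perm_length n v \<le> perm_length n w)"

lemma maxw_exists: "\<exists>w. maxw w"
proof -
  have "\<exists>x. x \<in> WJ J \<and> (\<forall>y. y \<in> WJ J \<longrightarrow> perm_length n y \<le> perm_length n x)"
    by (rule ex_has_greatest_nat[where k=id and b="n * n + 1"]) (auto intro: WJ.WJ_id simp: le_imp_less_Suc perm_length_bound)
  then show ?thesis by (auto simp: maxw_def)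
qed

lemma maxw_desc1:
  assumes "maxw w" "Suc y \<in> J"
  shows "w (Suc y) < w y"
proof -
  have wW: "w \<in> WJ J" and mx: "\<forall>v \<in> WJ J. perm_length n v \<le> perm_length n w"
    using assms(1) by (auto simp: maxw_def)
  have inj: "inj w" using WJ_props[OF wW] by blast
  have "\<not> w y < w (Suc y)"
  proof
    assume a: "w y < w (Suc y)"
    have "perm_length n w < perm_length n (w \<circ> sref (Suc y))"
      using swap_longer[OF assms(2)] a by simp
    moreover have "w \<circ> sref (Suc y) \<in> WJ J" using WJ.WJ_step[OF wW assms(2)] .
    ultimately show False using mx by (meson not_le)
  qed
  moreover have "w y \<noteq> w (Suc y)"
  proof
    assume "w y = w (Suc y)"
    then have "y = Suc y" by (rule injD[OF inj])
    then show False by simp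
  qed
  ultimately show ?thesis by simp
qed

lemma maxw_desc:
  assumes "maxw w" "conn J x y" "x < y"
  shows "w y < w x"
  using assms(2,3)
proof (induction y rule: less_induct)
  case (less y)
  obtain y' where y': "y = Suc y'" using less(3) by (cases y) auto
  have "min x y < Suc y' \<and> Suc y' \<le> max x y" using less(3) y' by simp
  then have "Suc y' \<in> J" using less(2) unfolding conn_def by blast
  then have a: "w y < w y'" using maxw_desc1[OF assms(1)] y' by simp
  show ?case
  proof (cases "x = y'")
    case True then show ?thesis using a by simp
  next
    case False
    then have xy: "x < y'" using less(3) y' by simp
    have "conn J x y'" using conn_between[of x y' y J] less(2) xy y' by simp
    then have "w y' < w x" using less(1)[of y'] xy y' by simp
    then show ?thesis using a by simp
  qed
qed

definition lo :: "nat \<Rightarrow> nat" where "lo x = (LEAST a. conn J a x)"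
definition hi :: "nat \<Rightarrow> nat" where "hi x = (GREATEST b. conn J b x)"

lemma conn_bound: "conn J b x \<Longrightarrow> b \<le> max x n"
proof (rule ccontr)
  assume a: "conn J b x" "\<not> b \<le> max x n"
  have "min b x < b \<and> b \<le> max b x" using a(2) by auto
  then have "b \<in> J" using a(1) unfolding conn_def by blast
  then show False using J_lt a by fastforce
qed

lemma lo_conn: "conn J (lo x) x" unfolding lo_def by (rule LeastI[of _ x]) simp
lemma lo_le: "conn J a x \<Longrightarrow> lo x \<le> a" unfolding lo_def by (rule Least_le)
lemma hi_conn: "conn J (hi x) x" unfolding hi_def by (rule GreatestI_nat[of _ x "max x n"]) (auto simp: conn_bound)
lemma hi_ge: "conn J b x \<Longrightarrow> b \<le> hi x" unfolding hi_def by (rule Greatest_le_nat[of _ b "max x n"]) (auto simp: conn_bound)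
lemma lo_le_x: "lo x \<le> x" using lo_le[of x x] by simp
lemma hi_ge_x: "x \<le> hi x" using hi_ge[of x x] by simp

lemma conn_iff_lohi: "conn J y x \<longleftrightarrow> lo x \<le> y \<and> y \<le> hi x"
proof
  assume "conn J y x" then show "lo x \<le> y \<and> y \<le> hi x" using lo_le hi_ge by auto
next
  assume a: "lo x \<le> y \<and> y \<le> hi x"
  have "conn J (lo x) (hi x)" using lo_conn hi_conn conn_trans conn_sym by blast
  then have c: "conn J (lo x) y \<and> conn J y (hi x)" using conn_between a by blast
  show "conn J y x"
  proof (cases "y \<le> x")
    case True then show ?thesis using conn_between[of "lo x" y x] lo_conn c conn_sym a by blast
  next
    case False then show ?thesis using conn_between[of x y "hi x"] hi_conn conn_sym a by auto
  qed
qed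

lemma lo_eq: "conn J y x \<Longrightarrow> lo y = lo x"
  by (meson conn_iff_lohi conn_sym conn_trans lo_conn order_antisym lo_le)
lemma hi_eq: "conn J y x \<Longrightarrow> hi y = hi x"
  by (meson conn_iff_lohi conn_sym conn_trans hi_conn order_antisym hi_ge)

definition wJ :: "nat \<Rightarrow> nat" where "wJ x = lo x + hi x - x"

lemma conn_same: "conn J a x \<Longrightarrow> conn J b x \<Longrightarrow> conn J a b"
  using conn_trans conn_sym by blast

lemma maxw_eq: assumes "maxw w" shows "w = wJ"
proof
  fix x
  let ?L = "lo x" and ?H = "hi x"
  have wconn: "conn J (w z) z" for z using assms WJ_props by (auto simp: maxw_def)
  have up: "w (?L + t) \<le> ?H - t" if "?L + t \<le> ?H" for t
    using that
  proof (induction t)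
    case 0
    have "conn J (w ?L) x" using conn_trans[OF wconn lo_conn] .
    then show ?case using hi_ge by simp
  next
    case (Suc t)
    have c1: "conn J (?L + t) x" using Suc.prems conn_iff_lohi by simp
    have c2: "conn J (?L + Suc t) x" using Suc.prems conn_iff_lohi by simp
    have "w (?L + Suc t) < w (?L + t)"
      by (rule maxw_desc[OF assms conn_same[OF c1 c2]]) simp
    moreover have "w (?L + t) \<le> ?H - t" using Suc by simp
    ultimately show ?case using Suc.prems by linarith
  qed
  have down: "?L + t \<le> w (?H - t)" if "?L + t \<le> ?H" for t
    using that
  proof (induction t)
    case 0
    have "conn J (w ?H) x" using conn_trans[OF wconn hi_conn] .
    then show ?case using lo_le by simp
  next
    case (Suc t)
    have c1: "conn J (?H - t) x" using Suc.prems conn_iff_lohi by simp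
    have c2: "conn J (?H - Suc t) x" using Suc.prems conn_iff_lohi by simp
    have "w (?H - t) < w (?H - Suc t)"
      by (rule maxw_desc[OF assms conn_same[OF c2 c1]]) (use Suc.prems in linarith)
    moreover have "?L + t \<le> w (?H - t)" using Suc by simp
    ultimately show ?case by linarith
  qed
  have "w x \<le> ?H - (x - ?L)" using up[of "x - ?L"] lo_le_x[of x] hi_ge_x[of x] by simp
  moreover have "?L + (?H - x) \<le> w x" using down[of "?H - x"] lo_le_x[of x] hi_ge_x[of x] by simp
  ultimately show "w x = wJ x" unfolding wJ_def using lo_le_x[of x] hi_ge_x[of x] by linarith
qed

lemma longest_eq: "longest n J = wJ"
proof -
  obtain w where w: "maxw w" using maxw_exists by blast
  have P: "wJ \<in> WJ J \<and> (\<forall>v \<in> WJ J. perm_length n v \<le> perm_length n wJ)"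
    using w maxw_eq[OF w] by (simp add: maxw_def)
  have U: "v = wJ" if "v \<in> WJ J \<and> (\<forall>u\<in>WJ J. perm_length n u \<le> perm_length n v)" for v
    using that maxw_eq by (simp add: maxw_def)
  show ?thesis unfolding longest_def using P U by (rule the_equality)
qed

lemma wJ_conn: "conn J (wJ x) x"
  using lo_le_x[of x] hi_ge_x[of x] by (simp add: conn_iff_lohi wJ_def) (intro conjI; linarith)

lemma wJ_inv: "wJ (wJ x) = x"
  using lo_eq[OF wJ_conn[of x]] hi_eq[OF wJ_conn[of x]] lo_le_x[of x] hi_ge_x[of x] by (simp add: wJ_def)

lemma wJ_ge: "n \<le> x \<Longrightarrow> wJ x = x" using conn_ge_n wJ_conn by blast
lemma wJ_lt: "x < n \<Longrightarrow> wJ x < n" using conn_lt_n wJ_conn by blast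

lemma wJ_rev: "conn J x y \<Longrightarrow> x < y \<Longrightarrow> wJ y < wJ x"
  using lo_eq[of x y] hi_eq[of x y] hi_ge_x[of y] by (simp add: wJ_def)

lemma wJ_keep: "\<not> conn J x y \<Longrightarrow> x < y \<Longrightarrow> wJ x < wJ y"
proof -
  assume a: "\<not> conn J x y" "x < y"
  obtain s where s: "s \<notin> J" "x < s" "s \<le> y" using not_conn_sep[OF a(2) a(1)] by blast
  have "wJ x < s" using conn_sep[OF conn_sym[OF wJ_conn[of x]] s(1,2)] .
  moreover have "s \<le> wJ y"
  proof (rule ccontr)
    assume "\<not> s \<le> wJ y"
    then have "wJ y < s" by simp
    then have "y < s" using conn_sep[OF wJ_conn[of y] s(1)] by blast
    then show False using s by simp
  qed
  ultimately show ?thesis by simp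
qed

end



definition bord :: "nat \<Rightarrow> (nat \<Rightarrow> nat \<Rightarrow> complex) \<Rightarrow> (nat \<Rightarrow> complex) \<Rightarrow> (nat \<Rightarrow> complex) \<Rightarrow> complex \<Rightarrow> (nat \<Rightarrow> nat \<Rightarrow> complex)" where
  "bord m M c r d = (\<lambda>i j. if i < m \<and> j < m then M i j else if i < m \<and> j = m then c i
      else if i = m \<and> j < m then r j else if i = m \<and> j = m then d else 0)"

lemma bord_mats: "bord m M c r d \<in> mats (Suc m)"
  by (auto simp: bord_def mats_def)

lemma bord_mult:
  "mmult (Suc m) (bord m M c r d) (bord m M' c' r' d') =
   bord m (\<lambda>i j. mmult m M M' i j + c i * r' j) (\<lambda>i. (\<Sum>l<m. M i l * c' l) + c i * d')
     (\<lambda>j. (\<Sum>l<m. r l * M' l j) + d * r' j) ((\<Sum>l<m. r l * c' l) + d * d')"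
proof (rule ext, rule ext)
  fix i j
  have s: "(\<Sum>l<Suc m. bord m M c r d i l * bord m M' c' r' d' l j) =
      (\<Sum>l<m. bord m M c r d i l * bord m M' c' r' d' l j) + bord m M c r d i m * bord m M' c' r' d' m j"
    by simp
  have t: "(\<Sum>l<m. bord m M c r d i l * bord m M' c' r' d' l j) =
    (\<Sum>l<m. (if i < m then M i l else if i = m then r l else 0) * (if j < m then M' l j else if j = m then c' l else 0))"
    by (rule sum.cong) (auto simp: bord_def)
  show "mmult (Suc m) (bord m M c r d) (bord m M' c' r' d') i j = bord m (\<lambda>i j. mmult m M M' i j + c i * r' j) (\<lambda>i. (\<Sum>l<m. M i l * c' l) + c i * d')
     (\<lambda>j. (\<Sum>l<m. r l * M' l j) + d * r' j) ((\<Sum>l<m. r l * c' l) + d * d') i j"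
    unfolding mmult_def[of "Suc m"] using s t
    by (auto simp: bord_def mmult_def less_Suc_eq)
qed

lemma mats_bord:
  assumes "A \<in> mats (Suc m)"
  shows "A = bord m (\<lambda>i j. if i < m \<and> j < m then A i j else 0) (\<lambda>i. A i m) (\<lambda>j. A m j) (A m m)"
  using assms by (auto simp: bord_def mats_def fun_eq_iff)

lemma idm_bord: "idm (Suc m) = bord m (idm m) (\<lambda>_. 0) (\<lambda>_. 0) 1"
  by (auto simp: bord_def idm_def fun_eq_iff)

lemma bord_cong:
  assumes "\<And>i j. i < m \<Longrightarrow> j < m \<Longrightarrow> M i j = M2 i j" "\<And>i. i < m \<Longrightarrow> c i = c2 i"
    "\<And>j. j < m \<Longrightarrow> r j = r2 j" "d = d2"
  shows "bord m M c r d = bord m M2 c2 r2 d2"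
  using assms by (auto simp: bord_def fun_eq_iff)

lemma mmult_entry: "mmult m A B = idm m \<Longrightarrow> i < m \<Longrightarrow> j < m \<Longrightarrow> (\<Sum>l<m. A i l * B l j) = (if i = j then 1 else 0)"
  by (drule fun_cong[of _ _ i], drule fun_cong[of _ _ j]) (simp add: mmult_def idm_def)

lemma sum_mat_vec:
  fixes M N :: "nat \<Rightarrow> nat \<Rightarrow> complex"
  shows "(\<Sum>l<m. M i l * (\<Sum>l'<m. N l l' * v l')) = (\<Sum>l'<m. (\<Sum>l<m. M i l * N l l') * v l')"
proof -
  have "(\<Sum>l<m. M i l * (\<Sum>l'<m. N l l' * v l')) = (\<Sum>l<m. \<Sum>l'<m. M i l * N l l' * v l')"
    by (rule sum.cong) (simp_all add: sum_distrib_left mult.assoc)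
  also have "\<dots> = (\<Sum>l'<m. \<Sum>l<m. M i l * N l l' * v l')" by (rule sum.swap)
  also have "\<dots> = (\<Sum>l'<m. (\<Sum>l<m. M i l * N l l') * v l')" by (simp add: sum_distrib_right)
  finally show ?thesis .
qed

lemma sum_delta_vec: "i < (m::nat) \<Longrightarrow> (\<Sum>l<m. (if i = l then 1 else 0) * (v l :: complex)) = v i"
proof -
  assume i: "i < m"
  have "(\<Sum>l<m. (if i = l then 1 else 0) * (v l :: complex)) = (\<Sum>l<m. if i = l then v i else 0)"
    by (rule sum.cong) auto
  also have "\<dots> = v i + (\<Sum>l\<in>{..<m} - {i}. if i = l then v i else 0)"
    by (subst sum.remove[of _ i]) (use i in auto)
  also have "\<dots> = v i" by (subst sum.neutral) auto
  finally show ?thesis .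
qed

definition lowdiag :: "nat set \<Rightarrow> (nat \<Rightarrow> nat \<Rightarrow> complex) \<Rightarrow> bool" where
  "lowdiag J X \<longleftrightarrow> (\<forall>i j. i < j \<and> conn J i j \<longrightarrow> X i j = 0)"

definition dens :: "nat \<Rightarrow> nat set \<Rightarrow> bool" where
  "dens m J \<longleftrightarrow> (\<forall>A \<in> PJ m J \<inter> GL m. \<forall>e>0. \<exists>U \<in> Bor m. \<exists>X \<in> PJ m J \<inter> GL m. lowdiag J X \<and>
      (\<forall>i<m. \<forall>j<m. cmod (A i j - mmult m U X i j) < e))"

lemma dens_step_nz:
  assumes IH: "dens m J" and A: "A \<in> PJ (Suc m) J" "A \<in> GL (Suc m)" and a: "A m m \<noteq> 0" and e: "e > 0"
  shows "\<exists>U \<in> Bor (Suc m). \<exists>X \<in> PJ (Suc m) J \<inter> GL (Suc m). lowdiag J X \<and>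
      (\<forall>i<Suc m. \<forall>j<Suc m. cmod (A i j - mmult (Suc m) U X i j) < e)"
proof -
  define a where "a = A m m"
  obtain H where H: "H \<in> mats (Suc m)" "mmult (Suc m) A H = idm (Suc m)" using A(2) by (auto simp: GL_def)
  have AH: "(\<Sum>l<m. A i l * H l j) + A i m * H m j = (if i = j then 1 else 0)" if "i < Suc m" "j < Suc m" for i j
    using mmult_entry[OF H(2) that] by simp
  define S where "S = (\<lambda>i j. if i < m \<and> j < m then A i j - A i m * A m j / a else 0)"
  define H' where "H' = (\<lambda>i j. if i < m \<and> j < m then H i j else 0)"
  have SP: "S \<in> PJ m J"
  proof -
    have "S i j = 0" if "s \<notin> J" "j < s" "s \<le> i" for s i j
    proof (cases "i < m \<and> j < m")
      case True
      have "A i j = 0" using PJ_zero[OF A(1) that] .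
      moreover have "A m j = 0" using PJ_zero[OF A(1) that(1,2)] that True by simp
      ultimately show ?thesis by (simp add: S_def)
    next
      case False then show ?thesis by (auto simp: S_def)
    qed
    then show ?thesis by (auto simp: PJ_def mats_def S_def)
  qed
  have SH: "mmult m S H' = idm m"
  proof (rule ext, rule ext)
    fix i j
    show "mmult m S H' i j = idm m i j"
    proof (cases "i < m \<and> j < m")
      case True
      then have i: "i < m" and j: "j < m" by auto
      have "(\<Sum>l<m. S i l * H' l j) = (\<Sum>l<m. A i l * H l j - (A i m / a) * (A m l * H l j))"
        by (rule sum.cong) (use i j in \<open>auto simp: S_def H'_def algebra_simps\<close>)
      also have "\<dots> = (\<Sum>l<m. A i l * H l j) - (A i m / a) * (\<Sum>l<m. A m l * H l j)"
        by (simp add: sum_subtractf sum_distrib_left)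
      also have "\<dots> = (if i = j then 1 else 0)"
      proof -
        have e1: "(\<Sum>l<m. A i l * H l j) + A i m * H m j = (if i = j then 1 else 0)" using AH[of i j] i j by simp
        have e2: "(\<Sum>l<m. A m l * H l j) = - (a * H m j)" using AH[of m j] j by (simp add: a_def eq_neg_iff_add_eq_0)
        have e3: "(A i m / a) * (\<Sum>l<m. A m l * H l j) = - (A i m * H m j)"
          unfolding e2 using a by (simp add: a_def field_simps)
        show ?thesis unfolding e3 using e1 by simp
      qed
      finally show ?thesis using i j by (simp add: mmult_def idm_def)
    qed (auto simp: mmult_def idm_def)
  qed
  have SG: "S \<in> GL m"
  proof -
    have "H' \<in> mats m" by (auto simp: H'_def mats_def)
    then show ?thesis using SH PJ_mats[OF SP] unfolding GL_def by blast
  qed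
  obtain U' X' where U': "U' \<in> Bor m" and X': "X' \<in> PJ m J" "X' \<in> GL m" "lowdiag J X'"
    and cl: "\<forall>i<m. \<forall>j<m. cmod (S i j - mmult m U' X' i j) < e"
    using IH SP SG e unfolding dens_def by blast
  define U where "U = bord m U' (\<lambda>i. A i m / a) (\<lambda>_. 0) 1"
  define X where "X = bord m X' (\<lambda>_. 0) (\<lambda>j. A m j) a"
  have UB: "U \<in> Bor (Suc m)"
  proof -
    obtain V' where V': "V' \<in> mats m" "mmult m U' V' = idm m" using U' by (auto simp: Bor_def GL_def)
    define V where "V = bord m V' (\<lambda>i. - (\<Sum>l<m. V' i l * (A l m / a))) (\<lambda>_. 0) 1"
    have "mmult (Suc m) U V = idm (Suc m)"
      unfolding U_def V_def bord_mult idm_bord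
    proof (rule bord_cong)
      show "mmult m U' V' i j + A i m / a * 0 = idm m i j" if "i < m" "j < m" for i j using V' by simp
      show "(\<Sum>l<m. U' i l * - (\<Sum>l'<m. V' l l' * (A l' m / a))) + A i m / a * 1 = 0" if "i < m" for i
      proof -
        have "(\<Sum>l<m. U' i l * - (\<Sum>l'<m. V' l l' * (A l' m / a))) = - (\<Sum>l<m. U' i l * (\<Sum>l'<m. V' l l' * (A l' m / a)))"
          by (simp add: sum_negf)
        also have "\<dots> = - (\<Sum>l'<m. (\<Sum>l<m. U' i l * V' l l') * (A l' m / a))" using sum_mat_vec[where M=U' and N=V' and v="\<lambda>l'. A l' m / a" and i=i and m=m] by simp
        also have "\<dots> = - (\<Sum>l'<m. (if i = l' then 1 else 0) * (A l' m / a))"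
          by (rule arg_cong[where f=uminus], rule sum.cong) (simp_all add: mmult_entry[OF V'(2) that])
        also have "\<dots> = - (A i m / a)" using sum_delta_vec[OF that, of "\<lambda>l'. A l' m / a"] by (simp only:)
        finally show ?thesis by simp
      qed
    qed simp_all
    then have "U \<in> GL (Suc m)" using V_def by (auto simp: GL_def U_def bord_mats intro!: bexI[of _ V])
    moreover have "U i j = 0" if "j < i" for i j
      using U' that by (auto simp: U_def bord_def Bor_def)
    ultimately show ?thesis by (simp add: Bor_def)
  qed
  have XG: "X \<in> GL (Suc m)"
  proof -
    obtain Y' where Y': "Y' \<in> mats m" "mmult m X' Y' = idm m" using X' by (auto simp: GL_def)
    define Y where "Y = bord m Y' (\<lambda>_. 0) (\<lambda>j. - (\<Sum>l<m. A m l * Y' l j) / a) (1 / a)"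
    have "mmult (Suc m) X Y = idm (Suc m)"
      unfolding X_def Y_def bord_mult idm_bord
      by (rule bord_cong) (use Y' a in \<open>auto simp: a_def\<close>)
    then show ?thesis by (auto simp: GL_def X_def Y_def bord_mats intro!: bexI[of _ Y])
  qed
  have XP: "X \<in> PJ (Suc m) J"
  proof -
    have "X i j = 0" if "s \<notin> J" "j < s" "s \<le> i" for s i j
      using PJ_zero[OF X'(1) that] PJ_zero[OF A(1) that] that by (auto simp: X_def bord_def)
    then show ?thesis by (auto simp: PJ_def X_def bord_mats)
  qed
  have XL: "lowdiag J X" using X'(3) by (auto simp: lowdiag_def X_def bord_def)
  have UX: "mmult (Suc m) U X = bord m (\<lambda>i j. mmult m U' X' i j + A i m / a * A m j) (\<lambda>i. A i m) (\<lambda>j. A m j) a"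
    unfolding U_def X_def bord_mult by (rule bord_cong) (use a in \<open>auto simp: a_def\<close>)
  have "cmod (A i j - mmult (Suc m) U X i j) < e" if "i < Suc m" "j < Suc m" for i j
  proof (cases "i < m \<and> j < m")
    case True
    have "A i j - mmult (Suc m) U X i j = S i j - mmult m U' X' i j"
      using True by (simp add: UX bord_def S_def)
    then show ?thesis using cl True by simp
  next
    case False
    then have "A i j - mmult (Suc m) U X i j = 0" using that by (auto simp: UX bord_def a_def less_Suc_eq)
    then show ?thesis using e by simp
  qed
  then show ?thesis using UB XG XP XL by blast
qed

lemma dens_step:
  assumes IH: "dens m J"
  shows "dens (Suc m) J"
  unfolding dens_def
proof (intro ballI allI impI)
  fix A :: "nat \<Rightarrow> nat \<Rightarrow> complex" and e :: real
  assume A: "A \<in> PJ (Suc m) J \<inter> GL (Suc m)" and e: "e > 0"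
  show "\<exists>U\<in>Bor (Suc m). \<exists>X\<in>PJ (Suc m) J \<inter> GL (Suc m). lowdiag J X \<and>
      (\<forall>i<Suc m. \<forall>j<Suc m. cmod (A i j - mmult (Suc m) U X i j) < e)"
  proof (cases "A m m = 0")
    case False
    have a1: "A \<in> PJ (Suc m) J" and a2: "A \<in> GL (Suc m)" using A by auto
    show ?thesis using dens_step_nz[OF IH a1 a2 False e] by blast
  next
    case True
    obtain H where H: "H \<in> mats (Suc m)" "mmult (Suc m) A H = idm (Suc m)" using A by (auto simp: GL_def)
    have "\<exists>j0<m. A m j0 \<noteq> 0"
    proof (rule ccontr)
      assume "\<not> (\<exists>j0<m. A m j0 \<noteq> 0)"
      then have "(\<Sum>l<Suc m. A m l * H l m) = 0" using True by (auto intro!: sum.neutral simp: less_Suc_eq)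
      then show False using mmult_entry[OF H(2), of m m] by simp
    qed
    then obtain j0 where j0: "j0 < m" "A m j0 \<noteq> 0" by blast
    define M where "M = (\<Sum>i<Suc m. cmod (A i j0))"
    have M0: "M \<ge> 0" by (simp add: M_def sum_nonneg)
    have Mb: "cmod (A i j0) \<le> M" if "i < Suc m" for i
      unfolding M_def by (rule member_le_sum) (use that in auto)
    define d :: real where "d = e / (2 * (M + 1))"
    have d0: "d > 0" using e M0 by (simp add: d_def)
    have dM: "d * M < e / 2"
    proof -
      have "d * M = (e / 2) * (M / (M + 1))" by (simp add: d_def field_simps)
      also have "\<dots> < (e / 2) * 1" using e M0 by (intro mult_strict_left_mono) auto
      finally show ?thesis by simp
    qed
    define T where "T = bord m (idm m) (\<lambda>i. if i = j0 then complex_of_real d else 0) (\<lambda>_. 0) 1"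
    define T' where "T' = bord m (idm m) (\<lambda>i. if i = j0 then - complex_of_real d else 0) (\<lambda>_. 0) 1"
    have TT': "mmult (Suc m) T T' = idm (Suc m)"
      unfolding T_def T'_def bord_mult idm_bord
    proof (rule bord_cong)
      show "mmult m (idm m) (idm m) i j + (if i = j0 then complex_of_real d else 0) * 0 = idm m i j" for i j
        by (simp add: mmult_idm_left)
      show "(\<Sum>l<m. idm m i l * (if l = j0 then - complex_of_real d else 0)) + (if i = j0 then complex_of_real d else 0) * 1 = 0"
        if "i < m" for i
      proof -
        have "(\<Sum>l<m. idm m i l * (if l = j0 then - complex_of_real d else 0)) = (\<Sum>l<m. (if i = l then 1 else 0) * (if l = j0 then - complex_of_real d else 0))"
          by (rule sum.cong) (use that in \<open>auto simp: idm_def\<close>)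
        also have "\<dots> = (if i = j0 then - complex_of_real d else 0)" by (rule sum_delta_vec[OF that])
        finally show ?thesis by simp
      qed
    qed simp_all
    have TB: "T \<in> Bor (Suc m)"
    proof -
      have "T \<in> GL (Suc m)" using TT' by (auto simp: GL_def T_def T'_def bord_mats)
      moreover have "T i j = 0" if "j < i" for i j using that j0 by (auto simp: T_def bord_def idm_def)
      ultimately show ?thesis by (simp add: Bor_def)
    qed
    define A' where "A' = mmult (Suc m) A T"
    have A'P: "A' \<in> PJ (Suc m) J" using A TB by (simp add: A'_def PJ_mult Bor_PJ)
    have A'G: "A' \<in> GL (Suc m)" using A TB by (simp add: A'_def GL_mult Bor_GL)
    have A'e: "A' i j = A i j + (if j = m then complex_of_real d * A i j0 else 0)" if "i < Suc m" "j < Suc m" for i j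
    proof -
      have Tl: "T l j = (if l = j then 1 else 0) + (if l = j0 \<and> j = m then complex_of_real d else 0)" if l: "l < Suc m" for l
      proof (cases "j = m")
        case True
        then show ?thesis using l j0 by (cases "l = m") (auto simp: T_def bord_def)
      next
        case False
        then have "j < m" using \<open>j < Suc m\<close> by simp
        then show ?thesis using l j0 False by (cases "l = m") (auto simp: T_def bord_def idm_def)
      qed
      have "A' i j = (\<Sum>l<Suc m. A i l * T l j)" unfolding A'_def mmult_def using that by simp
      also have "\<dots> = (\<Sum>l<Suc m. (if l = j then A i l else 0) + (if l = j0 then (if j = m then complex_of_real d * A i l else 0) else 0))"
        by (rule sum.cong) (simp_all add: Tl distrib_left)
      also have "\<dots> = (\<Sum>l<Suc m. (if l = j then A i l else 0)) + (\<Sum>l<Suc m. (if l = j0 then (if j = m then complex_of_real d * A i l else 0) else 0))"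
        by (rule sum.distrib)
      also have "\<dots> = A i j + (if j = m then complex_of_real d * A i j0 else 0)"
        using that j0 by (simp only: sum.delta finite_lessThan lessThan_iff) simp
      finally show ?thesis .
    qed
    have A'mm: "A' m m \<noteq> 0" using A'e[of m m] True j0 d0 by simp
    obtain U X where U: "U \<in> Bor (Suc m)" and X: "X \<in> PJ (Suc m) J \<inter> GL (Suc m)" "lowdiag J X"
      and cl: "\<forall>i<Suc m. \<forall>j<Suc m. cmod (A' i j - mmult (Suc m) U X i j) < e / 2"
      using dens_step_nz[OF IH A'P A'G A'mm, of "e / 2"] e by auto
    have "cmod (A i j - mmult (Suc m) U X i j) < e" if "i < Suc m" "j < Suc m" for i j
    proof -
      have "cmod (A i j - A' i j) \<le> d * M"
      proof (cases "j = m")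
        case True
        have "cmod (A i j - A' i j) = d * cmod (A i j0)" using A'e[OF that] True d0 by (simp add: norm_mult)
        also have "\<dots> \<le> d * M" using Mb[OF that(1)] d0 by (simp add: mult_left_mono)
        finally show ?thesis .
      next
        case False then show ?thesis using A'e[OF that] d0 M0 by simp
      qed
      moreover have "cmod (A' i j - mmult (Suc m) U X i j) < e / 2" using cl that by blast
      moreover have "cmod (A i j - mmult (Suc m) U X i j) \<le> cmod (A i j - A' i j) + cmod (A' i j - mmult (Suc m) U X i j)"
      proof -
        have "A i j - mmult (Suc m) U X i j = (A i j - A' i j) + (A' i j - mmult (Suc m) U X i j)" by simp
        then show ?thesis by (metis norm_triangle_ineq)
      qed
      ultimately show ?thesis using dM by linarith
    qed
    then show ?thesis using U X by blast
  qed
qed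

lemma dens_all: "dens m J"
proof (induction m)
  case 0
  have "idm 0 \<in> Bor 0" by simp
  moreover have "idm 0 \<in> PJ 0 J \<inter> GL 0" by simp
  moreover have "lowdiag J (idm 0)" by (simp add: lowdiag_def idm_def)
  ultimately show ?case unfolding dens_def by blast
next
  case (Suc m) then show ?case by (rule dens_step)
qed




context Jset
begin

abbreviation "PP \<equiv> pmat n wJ"

lemma PP_mats: "PP \<in> mats n" by (auto simp: pmat_def mats_def)

lemma pmat_right: "mmult n M PP i j = (if i < n \<and> j < n then M i (wJ j) else 0)"
proof (cases "i < n \<and> j < n")
  case True
  have "(\<Sum>l<n. M i l * PP l j) = (\<Sum>l<n. if l = wJ j then M i (wJ j) else 0)"
    by (rule sum.cong) (auto simp: pmat_def True)
  also have "\<dots> = M i (wJ j)" using wJ_lt True by simp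
  finally show ?thesis using True by (simp add: mmult_def)
qed (auto simp: mmult_def)

lemma wJ_eq_iff: "(i = wJ l) \<longleftrightarrow> (l = wJ i)"
  using wJ_inv by metis

lemma pmat_left: "mmult n PP M i j = (if i < n \<and> j < n then M (wJ i) j else 0)"
proof (cases "i < n \<and> j < n")
  case True
  have "(\<Sum>l<n. PP i l * M l j) = (\<Sum>l<n. if l = wJ i then M (wJ i) j else 0)"
    by (rule sum.cong) (use True in \<open>auto simp: pmat_def wJ_eq_iff\<close>)
  also have "\<dots> = M (wJ i) j" using wJ_lt True by simp
  finally show ?thesis using True by (simp add: mmult_def)
qed (auto simp: mmult_def)

lemma PP_sq: "mmult n PP PP = idm n"
proof (rule ext, rule ext)
  fix i j
  show "mmult n PP PP i j = idm n i j"
    unfolding pmat_right by (simp add: pmat_def idm_def wJ_inv wJ_lt wJ_eq_iff)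
qed

lemma PP_GL: "PP \<in> GL n" using PP_sq PP_mats by (auto simp: GL_def)

lemma PP_PJ: "PP \<in> PJ n J"
proof -
  have "PP i j = 0" if "s \<notin> J" "j < s" "s \<le> i" for s i j
  proof (rule ccontr)
    assume "PP i j \<noteq> 0"
    then have "i = wJ j" by (auto simp: pmat_def split: if_splits)
    then have "i < s" using conn_sep[OF conn_sym[OF wJ_conn[of j]] that(1,2)] by simp
    then show False using that by simp
  qed
  then show ?thesis using PP_mats by (auto simp: PJ_def)
qed

lemma BwB_PJ: "h \<in> BwB n wJ \<Longrightarrow> h \<in> PJ n J"
  unfolding BwB_def using PJ_mult[OF PJ_mult[OF Bor_PJ PP_PJ] Bor_PJ] by blast

definition close :: "(nat \<Rightarrow> nat \<Rightarrow> complex) \<Rightarrow> bool" where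
  "close g \<longleftrightarrow> (\<forall>e>0. \<exists>h \<in> BwB n wJ. \<forall>i<n. \<forall>j<n. cmod (g i j - h i j) < e)"

lemma close_PJ:
  assumes g: "g \<in> GL n" and c: "close g"
  shows "g \<in> PJ n J"
proof -
  have "g i j = 0" if s: "s \<notin> J" "j < s" "s \<le> i" for s i j
  proof (cases "i < n \<and> j < n")
    case True
    have "\<forall>e>0. cmod (g i j) < e"
    proof (intro allI impI)
      fix e :: real assume "e > 0"
      obtain h where h: "h \<in> BwB n wJ" "cmod (g i j - h i j) < e" using c \<open>e > 0\<close> True unfolding close_def by blast
      have "h i j = 0" using PJ_zero[OF BwB_PJ[OF h(1)] s] .
      then show "cmod (g i j) < e" using h by simp
    qed
    then show ?thesis
    proof (rule contrapos_pp)
      assume "g i j \<noteq> 0"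
      then have "cmod (g i j) > 0" by simp
      then show "\<not> (\<forall>e>0. cmod (g i j) < e)" by (meson order_less_irrefl)
    qed
  next
    case False then show ?thesis using GL_mats[OF g] by (auto simp: mats_def)
  qed
  then show ?thesis using GL_mats[OF g] by (auto simp: PJ_def)
qed

lemma PJ_close:
  assumes g: "g \<in> PJ n J" "g \<in> GL n"
  shows "close g"
  unfolding close_def
proof (intro allI impI)
  fix e :: real assume e: "e > 0"
  define A where "A = mmult n g PP"
  have A: "A \<in> PJ n J \<inter> GL n" using g by (simp add: A_def PJ_mult PP_PJ GL_mult PP_GL)
  obtain U X where U: "U \<in> Bor n" and X: "X \<in> PJ n J" "X \<in> GL n" "lowdiag J X"
    and cl: "\<forall>i<n. \<forall>j<n. cmod (A i j - mmult n U X i j) < e"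
    using dens_all[of n J] A e unfolding dens_def by blast
  define b2 where "b2 = mmult n (mmult n PP X) PP"
  have b2e: "b2 i j = (if i < n \<and> j < n then X (wJ i) (wJ j) else 0)" for i j
    by (simp add: b2_def pmat_right pmat_left wJ_lt)
  have b2B: "b2 \<in> Bor n"
  proof -
    have "b2 \<in> GL n" using X PP_GL by (simp add: b2_def GL_mult)
    moreover have "b2 i j = 0" if "j < i" for i j
    proof (cases "i < n \<and> j < n")
      case True
      show ?thesis
      proof (cases "conn J j i")
        case True
        then have "wJ i < wJ j" using wJ_rev that by blast
        moreover have "conn J (wJ i) (wJ j)"
          using conn_trans[OF conn_trans[OF wJ_conn[of i] conn_sym[OF True]] conn_sym[OF wJ_conn[of j]]] .
        ultimately show ?thesis using X(3) by (simp add: b2e lowdiag_def)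
      next
        case False
        have lt: "wJ j < wJ i" using wJ_keep[OF False that] .
        have "\<not> conn J (wJ j) (wJ i)"
        proof
          assume "conn J (wJ j) (wJ i)"
          then have "conn J j i" using conn_trans[OF conn_trans[OF conn_sym[OF wJ_conn[of j]]] wJ_conn[of i]] by blast
          then show False using False by simp
        qed
        then obtain s where "s \<notin> J" "wJ j < s" "s \<le> wJ i" using not_conn_sep[OF lt] by blast
        then show ?thesis using PJ_zero[OF X(1)] by (simp add: b2e)
      qed
    next
      case False then show ?thesis by (auto simp: b2e)
    qed
    ultimately show ?thesis by (simp add: Bor_def)
  qed
  define h where "h = mmult n (mmult n U PP) b2"
  have hB: "h \<in> BwB n wJ" unfolding h_def BwB_def using U b2B by blast
  have "h = mmult n (mmult n U X) PP"
  proof -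
    have "h = mmult n U (mmult n (mmult n PP PP) (mmult n X PP))" by (simp add: h_def b2_def mmult_assoc)
    also have "\<dots> = mmult n (mmult n U X) PP" using GL_mats[OF X(2)] by (simp add: PP_sq mmult_idm_left mmult_assoc)
    finally show ?thesis .
  qed
  then have he: "h i j = (if i < n \<and> j < n then mmult n U X i (wJ j) else 0)" for i j by (simp add: pmat_right)
  have gA: "g = mmult n A PP"
    using GL_mats[OF g(2)] by (simp add: A_def mmult_assoc PP_sq mmult_idm_right)
  have "cmod (g i j - h i j) < e" if "i < n" "j < n" for i j
  proof -
    have "g i j - h i j = A i (wJ j) - mmult n U X i (wJ j)"
      using that by (subst gA) (simp add: pmat_right he)
    then show ?thesis using cl that wJ_lt by simp
  qed
  then show "\<exists>h\<in>BwB n wJ. \<forall>i<n. \<forall>j<n. cmod (g i j - h i j) < e" using hB by blast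
qed

lemma Schubert_eq: "Schubert n (longest n J) = flag_of n ` (PJ n J \<inter> GL n)"
  unfolding longest_eq Schubert_def
  using close_PJ PJ_close unfolding close_def by blast

end



definition Nm :: "nat \<Rightarrow> nat \<Rightarrow> nat \<Rightarrow> complex" where
  "Nm m = (\<lambda>i l. if i < m \<and> l < m \<and> l = i + 1 then 1 else 0)"

definition hess :: "nat \<Rightarrow> (nat \<Rightarrow> nat \<Rightarrow> complex) \<Rightarrow> bool" where
  "hess m g \<longleftrightarrow> (\<exists>M \<in> mats m. (\<forall>l j. j + 1 < l \<longrightarrow> M l j = 0) \<and> mmult m (Nm m) g = mmult m g M)"

definition vecc :: "nat \<Rightarrow> (nat \<Rightarrow> nat \<Rightarrow> complex) \<Rightarrow> nat \<Rightarrow> (nat \<Rightarrow> complex) \<Rightarrow> (nat \<Rightarrow> complex)" where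
  "vecc m g i c = (\<lambda>a. if a < m then (\<Sum>j<i. c j * g a j) else 0)"

lemma Nm_mats: "Nm m \<in> mats m" by (auto simp: Nm_def mats_def)

lemma Nm_mult: "g \<in> mats m \<Longrightarrow> mmult m (Nm m) g a j = (if a < m \<and> a + 1 < m then g (a + 1) j else 0)"
proof -
  assume g: "g \<in> mats m"
  show ?thesis
  proof (cases "a < m \<and> j < m")
    case True
    have "(\<Sum>l<m. Nm m a l * g l j) = (\<Sum>l<m. if l = a + 1 then g (a + 1) j else 0)"
      by (rule sum.cong) (auto simp: Nm_def True)
    then show ?thesis using True by (simp add: mmult_def)
  next
    case False then show ?thesis using g by (auto simp: mmult_def mats_def)
  qed
qed

lemma sum_lessThan_cut:
  fixes f :: "nat \<Rightarrow> complex"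
  assumes "\<And>l. min p q \<le> l \<Longrightarrow> f l = 0"
  shows "(\<Sum>l<p. f l) = (\<Sum>l<q. f l)"
proof -
  have "(\<Sum>l<p. f l) = (\<Sum>l<min p q. f l)"
    by (rule sum.mono_neutral_right) (auto simp: assms)
  moreover have "(\<Sum>l<q. f l) = (\<Sum>l<min p q. f l)"
    by (rule sum.mono_neutral_right) (auto simp: assms)
  ultimately show ?thesis by simp
qed

lemma mmult_col:
  assumes "g \<in> mats m" "b \<in> mats m" "a < m"
  shows "mmult m g b a j = (\<Sum>l<m. g a l * b l j)"
  using assms by (auto simp: mmult_def mats_def)

lemma vecc_mult:
  assumes g: "g \<in> mats m" and b: "b \<in> mats m" and bz: "\<And>l j. j < i \<Longrightarrow> i' \<le> l \<Longrightarrow> b l j = 0"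
  shows "vecc m (mmult m g b) i c = vecc m g i' (\<lambda>l. \<Sum>j<i. b l j * c j)"
proof
  fix a show "vecc m (mmult m g b) i c a = vecc m g i' (\<lambda>l. \<Sum>j<i. b l j * c j) a"
  proof (cases "a < m")
    case True
    have "(\<Sum>j<i. c j * mmult m g b a j) = (\<Sum>j<i. c j * (\<Sum>l<m. g a l * b l j))"
      using mmult_col[OF g b True] by simp
    also have "\<dots> = (\<Sum>j<i. \<Sum>l<m. g a l * (b l j * c j))"
      by (rule sum.cong) (simp_all add: sum_distrib_left mult_ac)
    also have "\<dots> = (\<Sum>l<m. \<Sum>j<i. g a l * (b l j * c j))" by (rule sum.swap)
    also have "\<dots> = (\<Sum>l<m. g a l * (\<Sum>j<i. b l j * c j))" by (simp add: sum_distrib_left)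
    also have "\<dots> = (\<Sum>l<i'. (\<Sum>j<i. b l j * c j) * g a l)"
    proof (rule sum_lessThan_cut[where f="\<lambda>l. g a l * (\<Sum>j<i. b l j * c j)", THEN trans])
      show "g a l * (\<Sum>j<i. b l j * c j) = 0" if "min m i' \<le> l" for l
      proof (cases "m \<le> l")
        case True then show ?thesis using g by (simp add: mats_def)
      next
        case False then have "i' \<le> l" using that by simp
        then show ?thesis using bz by simp
      qed
    qed (simp add: mult.commute)
    finally show ?thesis using True by (simp add: vecc_def)
  qed (simp add: vecc_def)
qed

lemma sum_mat_vec_gen:
  fixes M N :: "nat \<Rightarrow> nat \<Rightarrow> complex"
  shows "(\<Sum>l<m. M i l * (\<Sum>l'<p. N l l' * v l')) = (\<Sum>l'<p. (\<Sum>l<m. M i l * N l l') * v l')"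
proof -
  have "(\<Sum>l<m. M i l * (\<Sum>l'<p. N l l' * v l')) = (\<Sum>l<m. \<Sum>l'<p. M i l * N l l' * v l')"
    by (rule sum.cong) (simp_all add: sum_distrib_left mult.assoc)
  also have "\<dots> = (\<Sum>l'<p. \<Sum>l<m. M i l * N l l' * v l')" by (rule sum.swap)
  also have "\<dots> = (\<Sum>l'<p. (\<Sum>l<m. M i l * N l l') * v l')" by (simp add: sum_distrib_right)
  finally show ?thesis .
qed

lemma fspace_eq:
  assumes g: "g \<in> mats m"
  shows "fspace m (flag_of m g) i = range (vecc m g i)"
proof
  show "range (vecc m g i) \<subseteq> fspace m (flag_of m g) i"
    using flag_self[OF g] by (auto simp: fspace_def vecc_def)
next
  show "fspace m (flag_of m g) i \<subseteq> range (vecc m g i)"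
  proof
    fix v assume "v \<in> fspace m (flag_of m g) i"
    then obtain g' c where g': "g' \<in> flag_of m g" and v: "v = vecc m g' i c"
      by (auto simp: fspace_def vecc_def)
    obtain b where b: "b \<in> Bor m" "g' = mmult m g b" using g' by (auto simp: flag_mem)
    have "v = vecc m g i (\<lambda>l. \<Sum>j<i. b l j * c j)"
      unfolding v b(2) by (rule vecc_mult[OF g GL_mats[OF Bor_GL[OF b(1)]]]) (use b(1) in \<open>auto simp: Bor_def\<close>)
    then show "v \<in> range (vecc m g i)" by simp
  qed
qed

lemma flag_Fl: "g \<in> GL m \<Longrightarrow> flag_of m g \<in> Fl m" by (simp add: Fl_def)

lemma nilp_vecc:
  assumes g: "g \<in> mats m"
  shows "nilp m (vecc m g i c) = vecc m (mmult m (Nm m) g) i c"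
proof
  fix a show "nilp m (vecc m g i c) a = vecc m (mmult m (Nm m) g) i c a"
    using g by (auto simp: nilp_def vecc_def Nm_mult)
qed

lemma hess_Pet:
  assumes g: "g \<in> GL m" and h: "hess m g"
  shows "flag_of m g \<in> Pet m"
proof -
  have gm: "g \<in> mats m" using GL_mats[OF g] .
  obtain M where M: "M \<in> mats m" "\<forall>l j. j + 1 < l \<longrightarrow> M l j = 0" "mmult m (Nm m) g = mmult m g M"
    using h by (auto simp: hess_def)
  have "nilp m ` fspace m (flag_of m g) i \<subseteq> fspace m (flag_of m g) (i + 1)" for i
  proof
    fix w assume "w \<in> nilp m ` fspace m (flag_of m g) i"
    then obtain c where w: "w = nilp m (vecc m g i c)" by (auto simp: fspace_eq[OF gm])
    have "w = vecc m (mmult m g M) i c" using w nilp_vecc[OF gm] M(3) by simp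
    also have "\<dots> = vecc m g (i + 1) (\<lambda>l. \<Sum>j<i. M l j * c j)"
      by (rule vecc_mult[OF gm M(1)]) (use M(2) in auto)
    finally show "w \<in> fspace m (flag_of m g) (i + 1)" by (simp add: fspace_eq[OF gm])
  qed
  then show ?thesis using flag_Fl[OF g] by (simp add: Pet_def)
qed

lemma Pet_hess:
  assumes g: "g \<in> GL m" and P: "flag_of m g \<in> Pet m"
  shows "hess m g"
proof -
  have gm: "g \<in> mats m" using GL_mats[OF g] .
  obtain h where h: "h \<in> GL m" "mmult m g h = idm m" "mmult m h g = idm m" using GL_inv2[OF g] by blast
  define Ng where "Ng = mmult m (Nm m) g"
  define M where "M = mmult m h Ng"
  have gM: "mmult m g M = Ng"
    by (simp add: M_def mmult_assoc[symmetric] h(2) mmult_idm_left[OF Nm_mats] Ng_def)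
  have "M l j = 0" if lj: "j + 1 < l" for l j
  proof (cases "l < m")
    case False then show ?thesis unfolding M_def mmult_def by simp
  next
    case lm: True
    have j1: "1 \<le> j + 1" "j + 1 \<le> m - 1" using lj lm by auto
    have "vecc m g (j + 1) (\<lambda>l. if l = j then 1 else 0) \<in> fspace m (flag_of m g) (j + 1)"
      by (simp add: fspace_eq[OF gm])
    moreover have "nilp m ` fspace m (flag_of m g) (j + 1) \<subseteq> fspace m (flag_of m g) (j + 1 + 1)"
    proof -
      have "\<forall>i. 1 \<le> i \<and> i \<le> m - 1 \<longrightarrow> nilp m ` fspace m (flag_of m g) i \<subseteq> fspace m (flag_of m g) (i + 1)"
        using P by (simp add: Pet_def)
      then show ?thesis using j1 by blast
    qed
    ultimately have "nilp m (vecc m g (j + 1) (\<lambda>l. if l = j then 1 else 0)) \<in> fspace m (flag_of m g) (j + 1 + 1)"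
      by blast
    then obtain c where c: "nilp m (vecc m g (j + 1) (\<lambda>l. if l = j then 1 else 0)) = vecc m g (j + 2) c"
      by (auto simp: fspace_eq[OF gm])
    have Ngc: "Ng a j = (\<Sum>l'<j + 2. c l' * g a l')" if "a < m" for a
    proof -
      have "Ng a j = vecc m Ng (j + 1) (\<lambda>l. if l = j then 1 else 0) a"
        using that by (simp add: vecc_def)
      also have "\<dots> = vecc m g (j + 2) c a" using c nilp_vecc[OF gm] by (simp add: Ng_def)
      finally show ?thesis using that by (simp add: vecc_def)
    qed
    have "M l j = (\<Sum>a<m. h l a * Ng a j)" using lm lj by (simp add: M_def mmult_def)
    also have "\<dots> = (\<Sum>a<m. h l a * (\<Sum>l'<j + 2. g a l' * c l'))"
      by (rule sum.cong) (simp_all add: Ngc mult.commute)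
    also have "\<dots> = (\<Sum>l'<j + 2. (\<Sum>a<m. h l a * g a l') * c l')"
      by (rule sum_mat_vec_gen)
    also have "\<dots> = 0"
    proof (rule sum.neutral, rule ballI)
      fix l' assume "l' \<in> {..<j + 2}"
      then have "l' \<noteq> l" using lj by simp
      have "(\<Sum>a<m. h l a * g a l') = 0"
      proof (cases "l' < m")
        case True
        then have "(\<Sum>a<m. h l a * g a l') = mmult m h g l l'" using lm by (simp add: mmult_def)
        also have "\<dots> = 0" using h(3) \<open>l' \<noteq> l\<close> by (simp add: idm_def)
        finally show ?thesis .
      next
        case False
        then show ?thesis using mats_zero[OF gm] by simp
      qed
      then show "(\<Sum>a<m. h l a * g a l') * c l' = 0" by simp
    qed
    finally show ?thesis .
  qed
  then have hz: "\<forall>l j. j + 1 < l \<longrightarrow> M l j = 0" by blast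
  have Mm: "M \<in> mats m" by (simp add: M_def)
  have e: "mmult m (Nm m) g = mmult m g M" using gM by (simp add: Ng_def)
  show ?thesis unfolding hess_def using Mm hz e by blast
qed

lemma Pet_iff: "g \<in> GL m \<Longrightarrow> flag_of m g \<in> Pet m \<longleftrightarrow> hess m g"
  using Pet_hess hess_Pet by blast




locale Blocks = Jset +
  fixes Js :: "nat set list"
  assumes A2: "\<forall>A \<in> set Js. A \<noteq> {} \<and> (\<exists>a b. A = {a..b})"
    and A3: "\<Union> (set Js) = J"
    and A4: "\<forall>k < length Js. \<forall>l < length Js. k \<noteq> l \<longrightarrow> Js ! k \<inter> Js ! l = {}"
    and A5: "\<forall>k < length Js. \<forall>l < length Js. k \<noteq> l \<longrightarrow> (\<forall>i \<in> Js ! k. i + 1 \<notin> Js ! l)"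
begin

abbreviation "len \<equiv> length Js"
definition st :: "nat \<Rightarrow> nat" where "st k = Min (Js ! k) - 1"
definition en :: "nat \<Rightarrow> nat" where "en k = Max (Js ! k)"
definition nk :: "nat \<Rightarrow> nat" where "nk k = card (Js ! k) + 1"

lemma blk_int:
  assumes k: "k < len"
  shows "Js ! k = {st k + 1 .. en k} \<and> st k < en k \<and> en k < n \<and> nk k = en k + 1 - st k \<and> Js ! k \<subseteq> J"
proof -
  have mem: "Js ! k \<in> set Js" using k by simp
  have "Js ! k \<noteq> {} \<and> (\<exists>a b. Js ! k = {a..b})" using A2 mem by blast
  then obtain a b where ab: "Js ! k = {a..b}" and ne: "{a..b} \<noteq> {}" by metis
  then have ab': "a \<le> b" by simp
  have sub: "Js ! k \<subseteq> J" using A3 mem by blast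
  then have "a \<in> J" "b \<in> J" using ab ab' by auto
  then have a1: "1 \<le> a" and bn: "b < n" using J_ge1 J_lt by auto
  have mi: "Min (Js ! k) = a" unfolding ab by (rule Min_eqI) (use ab' in auto)
  have ma: "Max (Js ! k) = b" unfolding ab by (rule Max_eqI) (use ab' in auto)
  have s: "st k = a - 1" using mi by (simp add: st_def)
  have e: "en k = b" using ma by (simp add: en_def)
  have c: "nk k = b + 1 - a + 1" unfolding nk_def ab by simp
  show ?thesis
  proof (intro conjI)
    show "Js ! k = {st k + 1..en k}" using ab s e a1 by simp
    show "st k < en k" using s e a1 ab' by simp
    show "en k < n" using e bn by simp
    show "nk k = en k + 1 - st k" using c s e a1 ab' by simp
    show "Js ! k \<subseteq> J" by (rule sub)
  qed
qed

lemma st_notJ: assumes k: "k < len" shows "st k \<notin> J"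
proof
  assume s: "st k \<in> J"
  then obtain l where l: "l < len" "st k \<in> Js ! l" using A3 by (auto simp: in_set_conv_nth)
  have bk: "Js ! k = {st k + 1 .. en k}" "st k < en k" using blk_int[OF k] by auto
  show False
  proof (cases "l = k")
    case True then show False using l bk by simp
  next
    case False
    then have "st k + 1 \<notin> Js ! k" using A5 k l by blast
    then show False using bk by simp
  qed
qed

lemma en_notJ: assumes k: "k < len" shows "en k + 1 \<notin> J"
proof
  assume s: "en k + 1 \<in> J"
  then obtain l where l: "l < len" "en k + 1 \<in> Js ! l" using A3 by (auto simp: in_set_conv_nth)
  have bk: "Js ! k = {st k + 1 .. en k}" "st k < en k" using blk_int[OF k] by auto
  show False
  proof (cases "l = k")
    case True then show False using l bk by simp
  next
    case False
    have "en k \<in> Js ! k" using bk by simp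
    then have "en k + 1 \<notin> Js ! l" using A5 k l False by blast
    then show False using l by simp
  qed
qed

lemma inJ_block: "i \<in> J \<Longrightarrow> \<exists>k<len. st k < i \<and> i \<le> en k"
proof -
  assume "i \<in> J"
  then obtain k where k: "k < len" "i \<in> Js ! k" using A3 by (auto simp: in_set_conv_nth)
  then show ?thesis using blk_int[OF k(1)] by auto
qed

lemma conn_block:
  assumes k: "k < len" and x: "st k \<le> x" "x \<le> en k"
  shows "conn J x y \<longleftrightarrow> st k \<le> y \<and> y \<le> en k"
proof
  assume c: "conn J x y"
  show "st k \<le> y \<and> y \<le> en k"
  proof (rule ccontr)
    assume "\<not> (st k \<le> y \<and> y \<le> en k)"
    then consider "y < st k" | "en k < y" by linarith
    then show False
    proof cases
      case 1
      then have "min x y < st k \<and> st k \<le> max x y" using x by simp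
      then have "st k \<in> J" using c unfolding conn_def by blast
      then show False using st_notJ[OF k] by simp
    next
      case 2
      then have "min x y < en k + 1 \<and> en k + 1 \<le> max x y" using x by simp
      then have "en k + 1 \<in> J" using c unfolding conn_def by blast
      then show False using en_notJ[OF k] by simp
    qed
  qed
next
  assume y: "st k \<le> y \<and> y \<le> en k"
  have "Js ! k = {st k + 1 .. en k}" "Js ! k \<subseteq> J" using blk_int[OF k] by auto
  then show "conn J x y" using x y unfolding conn_def by fastforce
qed


definition inb :: "nat \<Rightarrow> bool" where "inb x \<longleftrightarrow> (\<exists>k<len. st k \<le> x \<and> x \<le> en k)"

lemma conn_single:
  assumes x: "\<not> inb x"
  shows "conn J x y \<longleftrightarrow> y = x"
proof
  assume c: "conn J x y"
  show "y = x"
  proof (rule ccontr)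
    assume "y \<noteq> x"
    then consider "x < y" | "y < x" by linarith
    then show False
    proof cases
      case 1
      then have "min x y < x + 1 \<and> x + 1 \<le> max x y" by simp
      then have "x + 1 \<in> J" using c unfolding conn_def by blast
      then obtain k where "k < len" "st k < x + 1" "x + 1 \<le> en k" using inJ_block by blast
      then show False using x unfolding inb_def by force
    next
      case 2
      then have "min x y < x \<and> x \<le> max x y" by simp
      then have "x \<in> J" using c unfolding conn_def by blast
      then obtain k where "k < len" "st k < x" "x \<le> en k" using inJ_block by blast
      then show False using x unfolding inb_def by force
    qed
  qed
qed simp

lemma block_unique:
  assumes k: "k < len" and l: "l < len" and x: "st k \<le> x" "x \<le> en k" "st l \<le> x" "x \<le> en l"
  shows "k = l"
proof (rule ccontr)
  assume kl: "k \<noteq> l"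
  have "st k + 1 \<le> en k" using blk_int[OF k] by simp
  have "conn J x (st k + 1)" using conn_block[OF k x(1,2)] blk_int[OF k] by simp
  then have "st l \<le> st k + 1 \<and> st k + 1 \<le> en l" using conn_block[OF l x(3,4)] by simp
  moreover have "st k + 1 \<noteq> st l"
  proof
    assume "st k + 1 = st l"
    moreover have "st k + 1 \<in> J" using blk_int[OF k] by auto
    ultimately show False using st_notJ[OF l] by simp
  qed
  ultimately have "st k + 1 \<in> Js ! l" using blk_int[OF l] by auto
  moreover have "st k + 1 \<in> Js ! k" using blk_int[OF k] by auto
  ultimately show False using A4 k l kl by blast
qed

definition kof :: "nat \<Rightarrow> nat" where "kof x = (THE k. k < len \<and> st k \<le> x \<and> x \<le> en k)"

lemma kof_eq: "k < len \<Longrightarrow> st k \<le> x \<Longrightarrow> x \<le> en k \<Longrightarrow> kof x = k"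
  unfolding kof_def by (rule the_equality) (auto intro: block_unique)

lemma kof_prop: "inb x \<Longrightarrow> kof x < len \<and> st (kof x) \<le> x \<and> x \<le> en (kof x)"
  unfolding inb_def using kof_eq by auto

lemma conn_inb: "conn J x y \<Longrightarrow> x \<noteq> y \<Longrightarrow> inb x"
  using conn_single by metis

definition blk :: "nat \<Rightarrow> (nat \<Rightarrow> nat \<Rightarrow> complex) \<Rightarrow> (nat \<Rightarrow> nat \<Rightarrow> complex)" where
  "blk k g = (\<lambda>i j. if i < nk k \<and> j < nk k then g (st k + i) (st k + j) else 0)"

definition bd :: "(nat \<Rightarrow> nat \<Rightarrow> nat \<Rightarrow> complex) \<Rightarrow> (nat \<Rightarrow> nat \<Rightarrow> complex)" where
  "bd G = (\<lambda>i j. if i < n \<and> j < n then (if inb i \<and> conn J i j then G (kof i) (i - st (kof i)) (j - st (kof i))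
      else if i = j then 1 else 0) else 0)"

lemma blk_mats: "blk k g \<in> mats (nk k)" by (auto simp: blk_def mats_def)

lemma bd_mats: "bd G \<in> mats n" by (auto simp: bd_def mats_def)

lemma bd_conn: "bd G i j \<noteq> 0 \<Longrightarrow> conn J i j"
  by (auto simp: bd_def split: if_splits)

lemma bd_PJ: "bd G \<in> PJ n J"
proof -
  have "bd G i j = 0" if "s \<notin> J" "j < s" "s \<le> i" for s i j
  proof (rule ccontr)
    assume "bd G i j \<noteq> 0"
    then have "conn J j i" using bd_conn conn_sym by blast
    then have "i < s" using conn_sep that by blast
    then show False using that by simp
  qed
  then show ?thesis using bd_mats by (auto simp: PJ_def)
qed

lemma blk_range: "k < len \<Longrightarrow> t < nk k \<Longrightarrow> st k \<le> st k + t \<and> st k + t \<le> en k \<and> st k + t < n"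
  using blk_int[of k] by auto

lemma sum_shift:
  assumes k: "k < len" and f: "\<And>l. l < n \<Longrightarrow> l < st k \<or> en k < l \<Longrightarrow> f l = 0"
  shows "(\<Sum>l<n. f l) = (\<Sum>t<nk k. f (st k + t))"
proof -
  have b: "st k < en k" "en k < n" "nk k = en k + 1 - st k" using blk_int[OF k] by auto
  have "(\<Sum>l<n. f l) = (\<Sum>l\<in>{st k..en k}. f l)"
    by (rule sum.mono_neutral_right) (use b f in auto)
  also have "{st k..en k} = (\<lambda>t. st k + t) ` {..<nk k}"
  proof
    show "{st k..en k} \<subseteq> (\<lambda>t. st k + t) ` {..<nk k}"
    proof
      fix l assume "l \<in> {st k..en k}"
      then have "l = st k + (l - st k)" "l - st k < nk k" using b by auto
      then show "l \<in> (\<lambda>t. st k + t) ` {..<nk k}" by blast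
    qed
  qed (use b in auto)
  also have "(\<Sum>l\<in>(\<lambda>t. st k + t) ` {..<nk k}. f l) = (\<Sum>t<nk k. f (st k + t))"
    by (rule sum.reindex_cong[where l="\<lambda>t. st k + t"]) (auto simp: inj_on_def)
  finally show ?thesis .
qed

lemma blk_mult_gen:
  assumes k: "k < len"
    and z: "\<And>i j l. i < nk k \<Longrightarrow> j < nk k \<Longrightarrow> l < n \<Longrightarrow> l < st k \<or> en k < l \<Longrightarrow> g (st k + i) l * h l (st k + j) = 0"
  shows "blk k (mmult n g h) = mmult (nk k) (blk k g) (blk k h)"
proof (rule ext, rule ext)
  fix i j
  show "blk k (mmult n g h) i j = mmult (nk k) (blk k g) (blk k h) i j"
  proof (cases "i < nk k \<and> j < nk k")
    case True
    have r: "st k + i < n" "st k + j < n" using blk_range[OF k] True by auto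
    have "(\<Sum>l<n. g (st k + i) l * h l (st k + j)) = (\<Sum>t<nk k. g (st k + i) (st k + t) * h (st k + t) (st k + j))"
      by (rule sum_shift[OF k]) (use z True in auto)
    also have "\<dots> = (\<Sum>t<nk k. blk k g i t * blk k h t j)"
      by (rule sum.cong) (use True in \<open>auto simp: blk_def\<close>)
    finally show ?thesis using True r by (simp add: blk_def mmult_def)
  qed (auto simp: blk_def mmult_def)
qed

lemma blk_mult_PJ:
  assumes k: "k < len" and g: "g \<in> PJ n J" and h: "h \<in> PJ n J"
  shows "blk k (mmult n g h) = mmult (nk k) (blk k g) (blk k h)"
proof (rule blk_mult_gen[OF k])
  fix i j l assume ij: "i < nk k" "j < nk k" and l: "l < n" "l < st k \<or> en k < l"
  from l(2) show "g (st k + i) l * h l (st k + j) = 0"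
  proof
    assume "l < st k"
    then have "g (st k + i) l = 0" using PJ_zero[OF g st_notJ[OF k]] by simp
    then show ?thesis by simp
  next
    assume "en k < l"
    moreover have "st k + j < en k + 1" using blk_range[OF k ij(2)] by simp
    ultimately have "h l (st k + j) = 0" using PJ_zero[OF h en_notJ[OF k]] by simp
    then show ?thesis by simp
  qed
qed

lemma blk_idm: "k < len \<Longrightarrow> blk k (idm n) = idm (nk k)"
  using blk_range by (auto simp: blk_def idm_def fun_eq_iff)

lemma blk_GL:
  assumes k: "k < len" and g: "g \<in> PJ n J" "g \<in> GL n"
  shows "blk k g \<in> GL (nk k)"
proof -
  obtain h where h: "h \<in> mats n" "mmult n g h = idm n" using g(2) by (auto simp: GL_def)
  have hP: "h \<in> PJ n J" by (rule PJ_inv[OF g(1) h(1,2)])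
  have "mmult (nk k) (blk k g) (blk k h) = idm (nk k)"
    using blk_mult_PJ[OF k g(1) hP] h(2) blk_idm[OF k] by simp
  then show ?thesis using blk_mats by (auto simp: GL_def)
qed

lemma blk_Bor:
  assumes k: "k < len" and b: "b \<in> Bor n"
  shows "blk k b \<in> Bor (nk k)"
proof -
  have "blk k b \<in> GL (nk k)" using blk_GL[OF k Bor_PJ[OF b] Bor_GL[OF b]] .
  moreover have "blk k b i j = 0" if "j < i" for i j using b that by (auto simp: blk_def Bor_def)
  ultimately show ?thesis by (simp add: Bor_def)
qed

lemma bd_in_block:
  assumes k: "k < len" and i: "st k \<le> i" "i \<le> en k"
  shows "bd G i j = (if st k \<le> j \<and> j \<le> en k then G k (i - st k) (j - st k) else 0)"
proof -
  have "inb i" using k i by (auto simp: inb_def)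
  moreover have "kof i = k" using kof_eq[OF k i] .
  moreover have "i < n" using i blk_int[OF k] by simp
  moreover have en: "en k < n" using blk_int[OF k] by simp
  ultimately have b: "inb i" "kof i = k" "i < n" by auto
  show ?thesis
  proof (cases "st k \<le> j \<and> j \<le> en k")
    case True
    then have "j < n" "conn J i j" using en conn_block[OF k i] by auto
    then show ?thesis using b True by (simp add: bd_def)
  next
    case False
    then have "\<not> conn J i j" "i \<noteq> j" using conn_block[OF k i] i by auto
    then have "bd G i j = 0" using b by (simp add: bd_def)
    then show ?thesis using False by (simp only: if_False)
  qed
qed

lemma bd_out_block:
  assumes i: "\<not> inb i"
  shows "bd G i j = (if i < n \<and> i = j then 1 else 0)"
  using i conn_single[OF i] by (auto simp: bd_def)

lemma blk_bd: "k < len \<Longrightarrow> G k \<in> mats (nk k) \<Longrightarrow> blk k (bd G) = G k"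
proof -
  assume k: "k < len" and G: "G k \<in> mats (nk k)"
  show ?thesis
  proof (rule ext, rule ext)
    fix i j show "blk k (bd G) i j = G k i j"
    proof (cases "i < nk k \<and> j < nk k")
      case True
      then show ?thesis using blk_range[OF k, of i] blk_range[OF k, of j] by (simp add: blk_def bd_in_block[OF k])
    next
      case False then show ?thesis using G by (auto simp: blk_def mats_def)
    qed
  qed
qed


lemma bd_mult:
  assumes G: "\<And>k. k < len \<Longrightarrow> G k \<in> mats (nk k)" and H: "\<And>k. k < len \<Longrightarrow> H k \<in> mats (nk k)"
  shows "mmult n (bd G) (bd H) = bd (\<lambda>k. mmult (nk k) (G k) (H k))"
proof (rule ext, rule ext)
  fix i j
  show "mmult n (bd G) (bd H) i j = bd (\<lambda>k. mmult (nk k) (G k) (H k)) i j"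
  proof (cases "i < n \<and> j < n")
    case False then show ?thesis by (auto simp: mmult_def bd_def)
  next
    case True
    then have i: "i < n" and j: "j < n" by auto
    show ?thesis
    proof (cases "inb i")
      case True
      define k where "k = kof i"
      have k: "k < len" "st k \<le> i" "i \<le> en k" using kof_prop[OF True] by (auto simp: k_def)
      have ik: "i - st k < nk k" using k blk_int[OF k(1)] by auto
      have "(\<Sum>l<n. bd G i l * bd H l j) = (\<Sum>t<nk k. bd G i (st k + t) * bd H (st k + t) j)"
        by (rule sum_shift[OF k(1)]) (auto simp: bd_in_block[OF k(1) k(2,3)])
      also have "\<dots> = (\<Sum>t<nk k. G k (i - st k) t * (if st k \<le> j \<and> j \<le> en k then H k t (j - st k) else 0))"
      proof (rule sum.cong)
        fix t assume "t \<in> {..<nk k}"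
        then have t: "st k \<le> st k + t" "st k + t \<le> en k" using blk_range[OF k(1)] by auto
        show "bd G i (st k + t) * bd H (st k + t) j = G k (i - st k) t * (if st k \<le> j \<and> j \<le> en k then H k t (j - st k) else 0)"
          using bd_in_block[OF k(1) k(2,3), of G "st k + t"] bd_in_block[OF k(1) t, of H j] t by simp
      qed simp
      also have "\<dots> = bd (\<lambda>k. mmult (nk k) (G k) (H k)) i j"
      proof (cases "st k \<le> j \<and> j \<le> en k")
        case True
        then have jk: "j - st k < nk k" using blk_int[OF k(1)] by auto
        show ?thesis using True ik jk by (simp add: bd_in_block[OF k(1) k(2,3)] mmult_def)
      next
        case False
        then have c: "(st k \<le> j \<and> j \<le> en k) = False" by simp
        show ?thesis by (simp only: bd_in_block[OF k(1) k(2,3)] c if_False mult_zero_right sum.neutral_const)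
      qed
      finally show ?thesis using i j by (simp add: mmult_def)
    next
      case False
      have "(\<Sum>l<n. bd G i l * bd H l j) = (\<Sum>l<n. if l = i then bd H i j else 0)"
        by (rule sum.cong) (simp_all add: bd_out_block[OF False])
      also have "\<dots> = bd H i j" using i by simp
      also have "\<dots> = bd (\<lambda>k. mmult (nk k) (G k) (H k)) i j" by (simp add: bd_out_block[OF False])
      finally show ?thesis using i j by (simp add: mmult_def)
    qed
  qed
qed

lemma bd_idm: "bd (\<lambda>k. idm (nk k)) = idm n"
proof (rule ext, rule ext)
  fix i j
  show "bd (\<lambda>k. idm (nk k)) i j = idm n i j"
  proof (cases "inb i")
    case True
    define k where "k = kof i"
    have k: "k < len" "st k \<le> i" "i \<le> en k" using kof_prop[OF True] by (auto simp: k_def)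
    have r: "i - st k < nk k" "i < n" using k blk_int[OF k(1)] by auto
    show ?thesis
    proof (cases "st k \<le> j \<and> j \<le> en k")
      case True
      then have "j - st k < nk k" "j < n" using blk_int[OF k(1)] by auto
      then show ?thesis using True r k by (auto simp: bd_in_block[OF k(1) k(2,3)] idm_def)
    next
      case False
      then have "i \<noteq> j" using k by auto
      then show ?thesis using False by (simp add: bd_in_block[OF k(1) k(2,3)] idm_def)
    qed
  next
    case False then show ?thesis by (auto simp: bd_out_block idm_def)
  qed
qed

lemma bd_GL:
  assumes G: "\<And>k. k < len \<Longrightarrow> G k \<in> GL (nk k)"
  shows "bd G \<in> GL n"
proof -
  have "\<forall>k. \<exists>h. k < len \<longrightarrow> h \<in> mats (nk k) \<and> mmult (nk k) (G k) h = idm (nk k)"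
    using G by (auto simp: GL_def)
  then obtain H where H: "\<And>k. k < len \<Longrightarrow> H k \<in> mats (nk k) \<and> mmult (nk k) (G k) (H k) = idm (nk k)"
    by metis
  have "mmult n (bd G) (bd H) = bd (\<lambda>k. mmult (nk k) (G k) (H k))"
    by (rule bd_mult) (use G H GL_mats in auto)
  also have "\<dots> = bd (\<lambda>k. idm (nk k))"
    unfolding bd_def using H kof_prop by (auto simp: fun_eq_iff)
  also have "\<dots> = idm n" by (rule bd_idm)
  finally show ?thesis using bd_mats by (auto simp: GL_def)
qed

lemma bd_Bor:
  assumes G: "\<And>k. k < len \<Longrightarrow> G k \<in> Bor (nk k)"
  shows "bd G \<in> Bor n"
proof -
  have "bd G \<in> GL n" by (rule bd_GL) (use G Bor_GL in auto)
  moreover have "bd G i j = 0" if ji: "j < i" for i j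
  proof (cases "inb i")
    case True
    define k where "k = kof i"
    have k: "k < len" "st k \<le> i" "i \<le> en k" using kof_prop[OF True] by (auto simp: k_def)
    have "G k (i - st k) (j - st k) = 0" if "st k \<le> j" using G[OF k(1)] ji that by (auto simp: Bor_def)
    then show ?thesis by (simp add: bd_in_block[OF k(1) k(2,3)])
  next
    case False then show ?thesis using ji by (simp add: bd_out_block)
  qed
  ultimately show ?thesis by (simp add: Bor_def)
qed

lemma Nm_PJ: "Nm n \<in> PJ n J"
  by (rule upper_PJ[OF Nm_mats]) (auto simp: Nm_def)

lemma blk_Nm: "k < len \<Longrightarrow> blk k (Nm n) = Nm (nk k)"
proof (rule ext, rule ext)
  fix i j assume k: "k < len"
  show "blk k (Nm n) i j = Nm (nk k) i j"
  proof (cases "i < nk k \<and> j < nk k")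
    case True
    then show ?thesis using blk_range[OF k, of i] blk_range[OF k, of j] by (auto simp: blk_def Nm_def)
  qed (auto simp: blk_def Nm_def)
qed


lemma inv_family:
  assumes G: "\<And>k. k < len \<Longrightarrow> G k \<in> GL (nk k)"
  obtains H where "\<And>k. k < len \<Longrightarrow> H k \<in> GL (nk k) \<and> mmult (nk k) (G k) (H k) = idm (nk k) \<and> mmult (nk k) (H k) (G k) = idm (nk k)"
proof -
  have "\<forall>k. \<exists>h. k < len \<longrightarrow> h \<in> GL (nk k) \<and> mmult (nk k) (G k) h = idm (nk k) \<and> mmult (nk k) h (G k) = idm (nk k)"
    using G GL_inv2 by metis
  then obtain H where "\<forall>k. k < len \<longrightarrow> H k \<in> GL (nk k) \<and> mmult (nk k) (G k) (H k) = idm (nk k) \<and> mmult (nk k) (H k) (G k) = idm (nk k)"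
    by metis
  then show ?thesis using that by blast
qed

lemma bd_inv:
  assumes G: "\<And>k. k < len \<Longrightarrow> G k \<in> mats (nk k)" and H: "\<And>k. k < len \<Longrightarrow> H k \<in> mats (nk k)"
    and GH: "\<And>k. k < len \<Longrightarrow> mmult (nk k) (G k) (H k) = idm (nk k)"
  shows "mmult n (bd G) (bd H) = idm n"
proof -
  have "mmult n (bd G) (bd H) = bd (\<lambda>k. mmult (nk k) (G k) (H k))" by (rule bd_mult[OF G H])
  also have "\<dots> = bd (\<lambda>k. idm (nk k))"
    unfolding bd_def using GH kof_prop by (auto simp: fun_eq_iff)
  also have "\<dots> = idm n" by (rule bd_idm)
  finally show ?thesis .
qed

lemma conn_same_block:
  assumes c: "conn J j i" and ij: "i \<noteq> j"
  shows "inb i \<and> st (kof i) \<le> j \<and> j \<le> en (kof i)"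
proof -
  have "inb i" using conn_inb[OF conn_sym[OF c]] ij by simp
  then show ?thesis using kof_prop conn_block c conn_sym by blast
qed

lemma Levi:
  assumes g: "g \<in> PJ n J" "g \<in> GL n"
  shows "\<exists>u \<in> Bor n. g = mmult n (bd (\<lambda>k. blk k g)) u"
proof -
  have Gk: "blk k g \<in> GL (nk k)" if "k < len" for k using blk_GL[OF that g] .
  obtain H where H: "\<And>k. k < len \<Longrightarrow> H k \<in> GL (nk k) \<and> mmult (nk k) (blk k g) (H k) = idm (nk k) \<and> mmult (nk k) (H k) (blk k g) = idm (nk k)"
    using inv_family[of "\<lambda>k. blk k g"] Gk by blast
  define D where "D = bd (\<lambda>k. blk k g)"
  define Di where "Di = bd H"
  have DDi: "mmult n D Di = idm n" unfolding D_def Di_def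
    by (rule bd_inv) (use H blk_mats GL_mats in auto)
  define u where "u = mmult n Di g"
  have uP: "u \<in> PJ n J" by (simp add: u_def Di_def PJ_mult bd_PJ g(1))
  have uG: "u \<in> GL n" unfolding u_def Di_def by (rule GL_mult[OF bd_GL g(2)]) (use H in auto)
  have "u i j = 0" if ji: "j < i" for i j
  proof (cases "conn J j i")
    case False
    then obtain s where "s \<notin> J" "j < s" "s \<le> i" using not_conn_sep[OF ji] by blast
    then show ?thesis using PJ_zero[OF uP] by simp
  next
    case True
    define k where "k = kof i"
    have kb: "inb i" "st k \<le> j" "j \<le> en k" using conn_same_block[OF True] ji by (auto simp: k_def)
    have k: "k < len" "st k \<le> i" "i \<le> en k" using kof_prop[OF kb(1)] by (auto simp: k_def)
    have r: "i - st k < nk k" "j - st k < nk k" using k kb blk_int[OF k(1)] by auto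
    have "u i j = blk k u (i - st k) (j - st k)" using r k kb by (simp add: blk_def)
    also have "blk k u = mmult (nk k) (blk k Di) (blk k g)"
      unfolding u_def by (rule blk_mult_PJ[OF k(1) _ g(1)]) (simp add: Di_def bd_PJ)
    also have "blk k Di = H k" unfolding Di_def by (rule blk_bd[OF k(1)]) (use H[OF k(1)] GL_mats in auto)
    also have "mmult (nk k) (H k) (blk k g) = idm (nk k)" using H[OF k(1)] by simp
    moreover have "i - st k \<noteq> j - st k" using ji kb(2) by linarith
    ultimately show ?thesis by (simp add: idm_def)
  qed
  then have uB: "u \<in> Bor n" using uG by (simp add: Bor_def)
  have "mmult n D u = g"
    unfolding u_def by (simp add: mmult_assoc[symmetric] DDi mmult_idm_left GL_mats[OF g(2)])
  then have "g = mmult n (bd (\<lambda>k. blk k g)) u" by (simp add: D_def)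
  then show ?thesis using uB by blast
qed

lemma hess_bd:
  assumes G: "\<And>k. k < len \<Longrightarrow> G k \<in> GL (nk k)"
  shows "hess n (bd G) \<longleftrightarrow> (\<forall>k<len. hess (nk k) (G k))"
proof
  assume "hess n (bd G)"
  then obtain M where M: "M \<in> mats n" "\<forall>l j. j + 1 < l \<longrightarrow> M l j = 0" "mmult n (Nm n) (bd G) = mmult n (bd G) M"
    by (auto simp: hess_def)
  show "\<forall>k<len. hess (nk k) (G k)"
  proof (intro allI impI)
    fix k assume k: "k < len"
    have Gm: "G k \<in> mats (nk k)" using G[OF k] GL_mats by auto
    have Mk: "\<forall>l j. j + 1 < l \<longrightarrow> blk k M l j = 0" using M(2) by (auto simp: blk_def)
    have "mmult (nk k) (Nm (nk k)) (G k) = blk k (mmult n (Nm n) (bd G))"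
      using blk_mult_PJ[OF k Nm_PJ bd_PJ] blk_Nm[OF k] blk_bd[of k G, OF k Gm] by simp
    also have "\<dots> = blk k (mmult n (bd G) M)" using M(3) by simp
    also have "\<dots> = mmult (nk k) (blk k (bd G)) (blk k M)"
    proof (rule blk_mult_gen[OF k])
      fix i j l assume "i < nk k" "j < nk k" "l < n" "l < st k \<or> en k < l"
      then show "bd G (st k + i) l * M l (st k + j) = 0"
        using blk_range[OF k, of i] by (auto simp: bd_in_block[OF k])
    qed
    also have "blk k (bd G) = G k" by (rule blk_bd[of k G, OF k Gm])
    finally have e: "mmult (nk k) (Nm (nk k)) (G k) = mmult (nk k) (G k) (blk k M)" .
    show "hess (nk k) (G k)" unfolding hess_def by (rule bexI[of _ "blk k M"]) (use e Mk blk_mats in simp_all)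
  qed
next
  assume hk: "\<forall>k<len. hess (nk k) (G k)"
  obtain H where H: "\<And>k. k < len \<Longrightarrow> H k \<in> GL (nk k) \<and> mmult (nk k) (G k) (H k) = idm (nk k) \<and> mmult (nk k) (H k) (G k) = idm (nk k)"
    using inv_family[of G] G by blast
  define D where "D = bd G"
  define Di where "Di = bd H"
  have DDi: "mmult n D Di = idm n" unfolding D_def Di_def
    by (rule bd_inv) (use H G GL_mats in auto)
  define M where "M = mmult n (mmult n Di (Nm n)) D"
  have MP: "M \<in> PJ n J" by (simp add: M_def D_def Di_def PJ_mult bd_PJ Nm_PJ)
  have DM: "mmult n D M = mmult n (Nm n) D"
    unfolding M_def by (simp add: mmult_assoc[symmetric] DDi mmult_idm_left Nm_mats)
  have "M l j = 0" if lj: "j + 1 < l" for l j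
  proof (cases "conn J j l")
    case False
    then obtain s where "s \<notin> J" "j < s" "s \<le> l" using not_conn_sep[of j l] lj by auto
    then show ?thesis using PJ_zero[OF MP] by simp
  next
    case True
    define k where "k = kof l"
    have kb: "inb l" "st k \<le> j" "j \<le> en k" using conn_same_block[OF True] lj by (auto simp: k_def)
    have k: "k < len" "st k \<le> l" "l \<le> en k" using kof_prop[OF kb(1)] by (auto simp: k_def)
    have r: "l - st k < nk k" "j - st k < nk k" using k kb blk_int[OF k(1)] by auto
    have Gm: "G k \<in> mats (nk k)" using G[OF k(1)] GL_mats by auto
    have Hm: "H k \<in> mats (nk k)" using H[OF k(1)] GL_mats by auto
    obtain Mk where Mk: "Mk \<in> mats (nk k)" "\<forall>l j. j + 1 < l \<longrightarrow> Mk l j = 0"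
      "mmult (nk k) (Nm (nk k)) (G k) = mmult (nk k) (G k) Mk"
      using hk k(1) by (auto simp: hess_def)
    have "M l j = blk k M (l - st k) (j - st k)" using r k kb by (simp add: blk_def)
    also have "blk k M = mmult (nk k) (mmult (nk k) (H k) (Nm (nk k))) (G k)"
      unfolding M_def
      by (simp add: blk_mult_PJ[OF k(1)] PJ_mult bd_PJ Nm_PJ D_def Di_def blk_Nm[OF k(1)] blk_bd[of k G, OF k(1) Gm] blk_bd[of k H, OF k(1) Hm])
    also have "\<dots> = Mk"
      using Mk(3) H[OF k(1)] by (simp add: mmult_assoc mmult_assoc[symmetric] mmult_idm_left Mk(1))
    finally show ?thesis using Mk(2) lj k kb by simp
  qed
  then have hz: "\<forall>l j. j + 1 < l \<longrightarrow> M l j = 0" by blast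
  have Mm: "M \<in> mats n" by (simp add: M_def)
  have e: "mmult n (Nm n) (bd G) = mmult n (bd G) M" using DM by (simp add: D_def)
  show "hess n (bd G)" unfolding hess_def by (rule bexI[of _ M]) (use hz e Mm in simp_all)
qed

end



context Blocks
begin

abbreviation "ms \<equiv> map (\<lambda>A. card A + 1) Js"

lemma ms_nth: "k < len \<Longrightarrow> ms ! k = nk k" by (simp add: nk_def)

lemma XJ_iff: "F \<in> XJ n J \<longleftrightarrow> (\<exists>g. g \<in> PJ n J \<and> g \<in> GL n \<and> F = flag_of n g \<and> hess n g)"
proof
  assume "F \<in> XJ n J"
  then have a: "F \<in> flag_of n ` (PJ n J \<inter> GL n)" "F \<in> Pet n" unfolding XJ_def Schubert_eq by auto
  then obtain g where g: "g \<in> PJ n J" "g \<in> GL n" "F = flag_of n g" by blast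
  then have "hess n g" using a(2) Pet_iff[OF g(2)] by simp
  then show "\<exists>g. g \<in> PJ n J \<and> g \<in> GL n \<and> F = flag_of n g \<and> hess n g" using g by blast
next
  assume "\<exists>g. g \<in> PJ n J \<and> g \<in> GL n \<and> F = flag_of n g \<and> hess n g"
  then obtain g where g: "g \<in> PJ n J" "g \<in> GL n" "F = flag_of n g" "hess n g" by blast
  then have "F \<in> Pet n" using Pet_iff[OF g(2)] by simp
  moreover have "F \<in> flag_of n ` (PJ n J \<inter> GL n)" using g by blast
  ultimately show "F \<in> XJ n J" unfolding XJ_def Schubert_eq by simp
qed

definition rep :: "(nat \<Rightarrow> nat \<Rightarrow> complex) set \<Rightarrow> (nat \<Rightarrow> nat \<Rightarrow> complex)" where
  "rep F = (SOME g. g \<in> PJ n J \<and> g \<in> GL n \<and> F = flag_of n g)"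

definition fmap :: "(nat \<Rightarrow> nat \<Rightarrow> complex) set list \<Rightarrow> (nat \<Rightarrow> nat \<Rightarrow> complex) set list" where
  "fmap Fs = map (\<lambda>k. flag_of (nk k) (blk k (rep (hd Fs)))) [0..<len]"

lemma WD:
  assumes k: "k < len" and g: "g \<in> PJ n J" "g \<in> GL n" and g': "g' \<in> PJ n J" "g' \<in> GL n"
    and eq: "flag_of n g = flag_of n g'"
  shows "flag_of (nk k) (blk k g') = flag_of (nk k) (blk k g)"
proof -
  have "g' \<in> flag_of n g" using eq flag_self[OF GL_mats[OF g'(2)]] by simp
  then obtain b where b: "b \<in> Bor n" "g' = mmult n g b" by (auto simp: flag_mem)
  have "blk k g' = mmult (nk k) (blk k g) (blk k b)" using blk_mult_PJ[OF k g(1) Bor_PJ[OF b(1)]] b(2) by simp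
  then have "blk k g' \<in> flag_of (nk k) (blk k g)" using blk_Bor[OF k b(1)] by (auto simp: flag_mem)
  then show ?thesis by (rule flag_mem_eq)
qed

lemma fmap_flag:
  assumes g: "g \<in> PJ n J" "g \<in> GL n"
  shows "fmap [flag_of n g] = map (\<lambda>k. flag_of (nk k) (blk k g)) [0..<len]"
proof -
  have "rep (flag_of n g) \<in> PJ n J \<and> rep (flag_of n g) \<in> GL n \<and> flag_of n g = flag_of n (rep (flag_of n g))"
    unfolding rep_def by (rule someI[of _ g]) (use g in simp)
  then have r: "rep (flag_of n g) \<in> PJ n J" "rep (flag_of n g) \<in> GL n" "flag_of n g = flag_of n (rep (flag_of n g))" by auto
  show ?thesis unfolding fmap_def
  proof (rule map_cong)
    fix k assume "k \<in> set [0..<len]"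
    then have k: "k < len" by simp
    show "flag_of (nk k) (blk k (rep (hd [flag_of n g]))) = flag_of (nk k) (blk k g)"
      using WD[OF k r(1,2) g r(3)[symmetric]] by simp
  qed simp
qed

definition XX where "XX = {[F] | F. F \<in> XJ n J}"

lemma XX_iff: "x \<in> XX \<longleftrightarrow> (\<exists>g. g \<in> PJ n J \<and> g \<in> GL n \<and> hess n g \<and> x = [flag_of n g])"
proof
  assume "x \<in> XX"
  then obtain F where "x = [F]" "F \<in> XJ n J" unfolding XX_def by blast
  then show "\<exists>g. g \<in> PJ n J \<and> g \<in> GL n \<and> hess n g \<and> x = [flag_of n g]" unfolding XJ_iff by blast
next
  assume "\<exists>g. g \<in> PJ n J \<and> g \<in> GL n \<and> hess n g \<and> x = [flag_of n g]"
  then obtain g where g: "g \<in> PJ n J" "g \<in> GL n" "hess n g" "x = [flag_of n g]" by blast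
  then have "flag_of n g \<in> XJ n J" unfolding XJ_iff by blast
  then show "x \<in> XX" unfolding XX_def using g(4) by blast
qed

lemma blk_hess:
  assumes k: "k < len" and g: "g \<in> PJ n J" "g \<in> GL n" and h: "hess n g"
  shows "hess (nk k) (blk k g)"
proof -
  obtain u where u: "u \<in> Bor n" "g = mmult n (bd (\<lambda>k. blk k g)) u" using Levi[OF g] by blast
  have Gk: "\<And>k. k < len \<Longrightarrow> blk k g \<in> GL (nk k)" using blk_GL g by blast
  have D: "bd (\<lambda>k. blk k g) \<in> GL n" by (rule bd_GL[OF Gk])
  have "g \<in> flag_of n (bd (\<lambda>k. blk k g))" using u by (auto simp: flag_mem)
  then have "flag_of n g = flag_of n (bd (\<lambda>k. blk k g))" by (rule flag_mem_eq)
  then have "flag_of n (bd (\<lambda>k. blk k g)) \<in> Pet n" using Pet_iff[OF g(2)] h by simp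
  then have "hess n (bd (\<lambda>k. blk k g))" using Pet_iff[OF D] by simp
  then show ?thesis using hess_bd[of "\<lambda>k. blk k g"] Gk k by blast
qed

lemma fmap_into: "x \<in> XX \<Longrightarrow> fmap x \<in> prod_Pet ms"
proof -
  assume "x \<in> XX"
  then obtain g where g: "g \<in> PJ n J" "g \<in> GL n" "hess n g" "x = [flag_of n g]" using XX_iff by blast
  have "flag_of (nk k) (blk k g) \<in> Pet (nk k)" if "k < len" for k
    using Pet_iff[OF blk_GL[OF that g(1,2)]] blk_hess[OF that g(1,2,3)] by simp
  then show ?thesis using g(4) fmap_flag[OF g(1,2)] by (simp add: prod_Pet_def nk_def)
qed

lemma fmap_inj: "inj_on fmap XX"
proof (rule inj_onI)
  fix x y assume x: "x \<in> XX" and y: "y \<in> XX" and e: "fmap x = fmap y"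
  obtain g where g: "g \<in> PJ n J" "g \<in> GL n" "x = [flag_of n g]" using x XX_iff by blast
  obtain g' where g': "g' \<in> PJ n J" "g' \<in> GL n" "y = [flag_of n g']" using y XX_iff by blast
  have fe: "flag_of (nk k) (blk k g) = flag_of (nk k) (blk k g')" if k: "k < len" for k
  proof -
    have "map (\<lambda>k. flag_of (nk k) (blk k g)) [0..<len] ! k = map (\<lambda>k. flag_of (nk k) (blk k g')) [0..<len] ! k"
      using e g(3) g'(3) fmap_flag[OF g(1,2)] fmap_flag[OF g'(1,2)] by (simp del: map_eq_conv)
    then show ?thesis using k by simp
  qed
  have "\<forall>k. \<exists>c. k < len \<longrightarrow> c \<in> Bor (nk k) \<and> blk k g' = mmult (nk k) (blk k g) c"
  proof (intro allI)
    fix k show "\<exists>c. k < len \<longrightarrow> c \<in> Bor (nk k) \<and> blk k g' = mmult (nk k) (blk k g) c"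
    proof (cases "k < len")
      case True
      have "blk k g' \<in> flag_of (nk k) (blk k g)" using fe[OF True] flag_self[OF blk_mats] by simp
      then show ?thesis by (auto simp: flag_mem)
    qed simp
  qed
  then obtain C where C: "\<And>k. k < len \<Longrightarrow> C k \<in> Bor (nk k) \<and> blk k g' = mmult (nk k) (blk k g) (C k)" by metis
  obtain u where u: "u \<in> Bor n" "g = mmult n (bd (\<lambda>k. blk k g)) u" using Levi[OF g(1,2)] by blast
  obtain u' where u': "u' \<in> Bor n" "g' = mmult n (bd (\<lambda>k. blk k g')) u'" using Levi[OF g'(1,2)] by blast
  have "bd (\<lambda>k. blk k g') = bd (\<lambda>k. mmult (nk k) (blk k g) (C k))"
    unfolding bd_def using C kof_prop by (auto simp: fun_eq_iff)
  also have "\<dots> = mmult n (bd (\<lambda>k. blk k g)) (bd C)"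
    by (rule bd_mult[symmetric]) (use C blk_mats Bor_GL GL_mats in auto)
  finally have D': "bd (\<lambda>k. blk k g') = mmult n (bd (\<lambda>k. blk k g)) (bd C)" .
  have bC: "bd C \<in> Bor n" by (rule bd_Bor) (use C in auto)
  have "g' = mmult n (bd (\<lambda>k. blk k g)) (mmult n (bd C) u')" using u'(2) D' by (simp add: mmult_assoc)
  then have "g' \<in> flag_of n (bd (\<lambda>k. blk k g))" using Bor_mult[OF bC u'(1)] by (auto simp: flag_mem)
  then have "flag_of n g' = flag_of n (bd (\<lambda>k. blk k g))" by (rule flag_mem_eq)
  moreover have "g \<in> flag_of n (bd (\<lambda>k. blk k g))" using u by (auto simp: flag_mem)
  then have "flag_of n g = flag_of n (bd (\<lambda>k. blk k g))" by (rule flag_mem_eq)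
  ultimately show "x = y" using g(3) g'(3) by simp
qed

lemma Y_elem:
  assumes Fs: "Fs \<in> prod_Pet ms"
  obtains G where "\<And>k. k < len \<Longrightarrow> G k \<in> GL (nk k) \<and> Fs ! k = flag_of (nk k) (G k)" "length Fs = len"
proof -
  have "\<forall>k. \<exists>g. k < len \<longrightarrow> g \<in> GL (nk k) \<and> Fs ! k = flag_of (nk k) g"
    using Fs by (auto simp: prod_Pet_def Pet_def Fl_def nk_def)
  then obtain G where "\<And>k. k < len \<Longrightarrow> G k \<in> GL (nk k) \<and> Fs ! k = flag_of (nk k) (G k)" by metis
  moreover have "length Fs = len" using Fs by (simp add: prod_Pet_def)
  ultimately show ?thesis using that by blast
qed

lemma bd_X:
  assumes G: "\<And>k. k < len \<Longrightarrow> G k \<in> GL (nk k)" and P: "\<And>k. k < len \<Longrightarrow> flag_of (nk k) (G k) \<in> Pet (nk k)"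
  shows "[flag_of n (bd G)] \<in> XX" "fmap [flag_of n (bd G)] = map (\<lambda>k. flag_of (nk k) (G k)) [0..<len]"
proof -
  have D: "bd G \<in> PJ n J" "bd G \<in> GL n" using bd_PJ bd_GL[OF G] by auto
  have "hess n (bd G)" using hess_bd[OF G] P Pet_iff G by blast
  then show "[flag_of n (bd G)] \<in> XX" using D XX_iff by blast
  show "fmap [flag_of n (bd G)] = map (\<lambda>k. flag_of (nk k) (G k)) [0..<len]"
    using fmap_flag[OF D] blk_bd G GL_mats by simp
qed

lemma fmap_surj: "prod_Pet ms \<subseteq> fmap ` XX"
proof
  fix Fs assume Fs: "Fs \<in> prod_Pet ms"
  obtain G where G: "\<And>k. k < len \<Longrightarrow> G k \<in> GL (nk k) \<and> Fs ! k = flag_of (nk k) (G k)" and l: "length Fs = len"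
    using Y_elem[OF Fs] by blast
  have P: "flag_of (nk k) (G k) \<in> Pet (nk k)" if "k < len" for k
    using Fs G that by (auto simp: prod_Pet_def nk_def)
  have "fmap [flag_of n (bd G)] = Fs"
    using bd_X(2)[OF _ P] G l by (auto intro: nth_equalityI)
  then show "Fs \<in> fmap ` XX" using bd_X(1)[OF _ P] G by blast
qed

lemma fmap_bij: "bij_betw fmap XX (prod_Pet ms)"
  unfolding bij_betw_def using fmap_inj fmap_into fmap_surj by blast


lemma mflag1: "mflag [m] G = [flag_of m (G 0)]" by (simp add: mflag_def)

lemma mflag_ms: "mflag ms G = map (\<lambda>k. flag_of (nk k) (G k)) [0..<len]"
  unfolding mflag_def by (simp add: nk_def)

lemma fmap_morph: "morphism [n] XX ms fmap"
  unfolding morphism_def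
proof (intro ballI)
  fix G0 assume "G0 \<in> lifts [n] XX"
  let ?P = "\<lambda>k i j (G :: nat \<Rightarrow> nat \<Rightarrow> nat \<Rightarrow> complex). G 0 (st k + i) (st k + j)"
  let ?q = "\<lambda>G :: nat \<Rightarrow> nat \<Rightarrow> nat \<Rightarrow> complex. (1::complex)"
  have poly: "\<forall>k i j. ?P k i j \<in> polyfun" by (auto intro: polyfun.pf_coord)
  have q: "?q \<in> polyfun" by (rule polyfun.pf_const)
  have main: "(let H = (\<lambda>k i j. if k < length ms \<and> i < ms ! k \<and> j < ms ! k then ?P k i j G else 0)
            in (\<forall>k < length ms. H k \<in> GL (ms ! k)) \<and> mflag ms H = fmap (mflag [n] G))"
    if G: "G \<in> lifts [n] XX" for G
  proof -
    have G0: "G 0 \<in> GL n" and GX: "[flag_of n (G 0)] \<in> XX" using G by (auto simp: lifts_def mflag1)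
    obtain g where g: "g \<in> PJ n J" "g \<in> GL n" "[flag_of n (G 0)] = [flag_of n g]" using GX XX_iff by blast
    have "G 0 \<in> flag_of n g" using g(3) flag_self[OF GL_mats[OF G0]] by simp
    then have GP: "G 0 \<in> PJ n J" by (rule flag_mem_PJ[OF g(1)])
    define H where "H = (\<lambda>k i j. if k < length ms \<and> i < ms ! k \<and> j < ms ! k then ?P k i j G else 0)"
    have Hk: "H k = blk k (G 0)" if "k < len" for k
      using that by (auto simp: H_def blk_def nk_def fun_eq_iff)
    have "\<forall>k < length ms. H k \<in> GL (ms ! k)" using Hk blk_GL[OF _ GP G0] by (simp add: nk_def)
    moreover have "mflag ms H = fmap (mflag [n] G)"
      unfolding mflag_ms mflag1 fmap_flag[OF GP G0] using Hk by simp
    ultimately show ?thesis by (simp add: H_def Let_def)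
  qed
  show "\<exists>P q. q \<in> polyfun \<and> (\<forall>k i j. P k i j \<in> polyfun) \<and> q G0 \<noteq> 0 \<and>
        (\<forall>G\<in>lifts [n] XX. q G \<noteq> 0 \<longrightarrow>
          (let H = \<lambda>k i j. if k < length ms \<and> i < ms ! k \<and> j < ms ! k then P k i j G else 0
           in (\<forall>k<length ms. H k \<in> GL (ms ! k)) \<and> mflag ms H = fmap (mflag [n] G)))"
    by (rule exI[of _ ?P], rule exI[of _ ?q]) (use poly q main in simp)
qed

lemma bd_poly: "(\<lambda>G. bd G i j) \<in> polyfun"
proof (cases "i < n \<and> j < n \<and> inb i \<and> conn J i j")
  case True
  then have "(\<lambda>G. bd G i j) = (\<lambda>G. G (kof i) (i - st (kof i)) (j - st (kof i)))" by (simp add: bd_def fun_eq_iff)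
  then show ?thesis by (simp add: polyfun.pf_coord)
next
  case False
  then have "(\<lambda>G. bd G i j) = (\<lambda>G. if i < n \<and> j < n \<and> i = j then 1 else 0)" by (auto simp: bd_def fun_eq_iff)
  then show ?thesis by (simp add: polyfun.pf_const)
qed

lemma inv_morph: "morphism ms (prod_Pet ms) [n] (inv_into XX fmap)"
  unfolding morphism_def
proof (intro ballI)
  fix G0 assume "G0 \<in> lifts ms (prod_Pet ms)"
  let ?P = "\<lambda>(k::nat) i j (G :: nat \<Rightarrow> nat \<Rightarrow> nat \<Rightarrow> complex). bd G i j"
  let ?q = "\<lambda>G :: nat \<Rightarrow> nat \<Rightarrow> nat \<Rightarrow> complex. (1::complex)"
  have poly: "\<forall>k i j. ?P k i j \<in> polyfun" using bd_poly by simp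
  have q: "?q \<in> polyfun" by (rule polyfun.pf_const)
  have main: "(let H = (\<lambda>k i j. if k < length [n] \<and> i < [n] ! k \<and> j < [n] ! k then ?P k i j G else 0)
            in (\<forall>k < length [n]. H k \<in> GL ([n] ! k)) \<and> mflag [n] H = inv_into XX fmap (mflag ms G))"
    if G: "G \<in> lifts ms (prod_Pet ms)" for G
  proof -
    have Gk: "G k \<in> GL (nk k)" if "k < len" for k using G that by (auto simp: lifts_def nk_def)
    have FY: "mflag ms G \<in> prod_Pet ms" using G by (auto simp: lifts_def)
    have P: "flag_of (nk k) (G k) \<in> Pet (nk k)" if "k < len" for k
    proof -
      have "mflag ms G ! k \<in> Pet (ms ! k)" using FY that by (simp add: prod_Pet_def)
      then show ?thesis using that unfolding mflag_ms ms_nth[OF that] by simp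
    qed
    have x: "[flag_of n (bd G)] \<in> XX" and fx0: "fmap [flag_of n (bd G)] = map (\<lambda>k. flag_of (nk k) (G k)) [0..<len]"
      using bd_X[OF Gk P] by auto
    have fx: "fmap [flag_of n (bd G)] = mflag ms G" unfolding mflag_ms by (rule fx0)
    have inv: "inv_into XX fmap (mflag ms G) = [flag_of n (bd G)]"
      using inv_into_f_eq[OF fmap_inj x fx] .
    define H where "H = (\<lambda>k i j. if k < length [n] \<and> i < [n] ! k \<and> j < [n] ! k then ?P k i j G else 0)"
    have H0: "H 0 = bd G" using bd_mats by (auto simp: H_def fun_eq_iff mats_def)
    have "\<forall>k < length [n]. H k \<in> GL ([n] ! k)" using H0 bd_GL[OF Gk] by simp
    moreover have "mflag [n] H = inv_into XX fmap (mflag ms G)" unfolding inv mflag1 H0 ..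
    ultimately show ?thesis by (simp add: H_def Let_def)
  qed
  show "\<exists>P q. q \<in> polyfun \<and> (\<forall>k i j. P k i j \<in> polyfun) \<and> q G0 \<noteq> 0 \<and>
        (\<forall>G\<in>lifts ms (prod_Pet ms). q G \<noteq> 0 \<longrightarrow>
          (let H = \<lambda>k i j. if k < length [n] \<and> i < [n] ! k \<and> j < [n] ! k then P k i j G else 0
           in (\<forall>k<length [n]. H k \<in> GL ([n] ! k)) \<and> mflag [n] H = inv_into XX fmap (mflag ms G)))"
    by (rule exI[of _ ?P], rule exI[of _ ?q]) (use poly q main in simp)
qed

lemma main_iso: "var_iso [n] XX ms (prod_Pet ms)"
  unfolding var_iso_def using fmap_bij fmap_morph inv_morph by blast

end

theorem corollary3p6:
  fixes n :: nat and J :: "nat set" and Js :: "nat set list"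
  assumes "J \<subseteq> {1..n - 1}"
    and "\<forall>A \<in> set Js. A \<noteq> {} \<and> (\<exists>a b. A = {a..b})"
    and "\<Union> (set Js) = J"
    and "\<forall>k < length Js. \<forall>l < length Js. k \<noteq> l \<longrightarrow> Js ! k \<inter> Js ! l = {}"
    and "\<forall>k < length Js. \<forall>l < length Js. k \<noteq> l \<longrightarrow> (\<forall>i \<in> Js ! k. i + 1 \<notin> Js ! l)"
  shows "var_iso [n] {[F] | F. F \<in> XJ n J} (map (\<lambda>A. card A + 1) Js)
           (prod_Pet (map (\<lambda>A. card A + 1) Js))"
proof -
  interpret B: Blocks n J Js
    by (unfold_locales) (use assms in auto)
  show ?thesis using B.main_iso unfolding B.XX_def .
qed


end
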